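(* With $H,E,P$ the generating functions $H(t,\bar\tau,\underline\tau)=\prod_i(1-(tx_i+\bar\tau\phi_i+\underline\tau\theta_i))^{-1}$, $E(t,\bar\tau,\underline\tau)=\prod_i(1+tx_i+\bar\tau\phi_i+\underline\tau\theta_i)$, $P(t,\bar\tau,\underline\tau)=\sum_i\frac{tx_i+\bar\tau\phi_i+\underline\tau\theta_i}{1-(tx_i+\bar\tau\phi_i+\underline\tau\theta_i)}$, one has $H(t,\bar\tau,\underline\tau)E(-t,-\bar\tau,-\underline\tau)=1$, $H P=\mathcal E H$ and $E(t,\bar\tau,\underline\tau)P(-t,-\bar\tau,-\underline\tau)=-\mathcal E E(t,\bar\tau,\underline\tau)$, where $\mathcal E$ is the Euler operator multiplying each monomial $t^a\bar\tau^{b}\underline\tau^{c}$ by $a+b+c$. Consequently, for every $n\ge0$: $$\sum_{r=0}^n(-1)^r\big(\bar{\underline e}_r h_{n-r}-\bar h_{n-r}\underline e_r-\bar e_r\underline h_{n-r}+e_r\bar{\underline h}_{n-r}\big)=0,$$ $$(n+2)\bar{\underline h}_n=\sum_{r=0}^n\Big(p_r\bar{\underline h}_{n-r}+(r+1)\big(\bar p_r\underline h_{n-r}+\bar h_{n-r}\underline p_r\big)+(r+2)(r+1)\bar{\underline p}_r h_{n-r}\Big),$$ $$(n+2)\bar{\underline e}_n=\sum_{r=0}^n(-1)^{r+1}\Big(p_r\bar{\underline e}_{n-r}-(r+1)\big(\bar p_r\underline e_{n-r}+\bar e_{n-r}\underline p_r\big)+(r+2)(r+1)\bar{\underline p}_r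 e_{n-r}\Big),$$ and also $\sum_{r=0}^n(-1)^r(e_r\bar h_{n-r}-\bar e_rh_{n-r})=0$, $(n+1)\bar h_n=\sum_{r=0}^n(p_r\bar h_{n-r}+(r+1)\bar p_rh_{n-r})$, $(n+1)\bar e_n=\sum_{r=0}^n(-1)^{r+1}(p_r\bar e_{n-r}-(r+1)\bar p_re_{n-r})$, together with the same three identities with all overlines replaced by underlines.
   Context: Let $x_1,x_2,\dots$ be commuting variables and $\phi_1,\phi_2,\dots,\theta_1,\theta_2,\dots$ Grassmann variables: all $\phi$'s and $\theta$'s pairwise anticommute and commute with the $x$'s; $\bar\tau,\underline\tau$ are two further Grassmann variables anticommuting with each other and with all $\phi_i,\theta_i$, commuting with $t$ and the $x_i$. Let $h_n,e_n$ be the classical complete homogeneous and elementary symmetric functions in the $x$'s ($h_0=e_0=1$), $\partial_i=\partial/\partial x_i$. For $n\ge0$ and $f\in\{h,e\}$: $\bar f_n=\sum_i\phi_i\,\partial_if_{n+1}$, $\underline f_n=\sum_i\theta_i\,\partial_if_{n+1}$, $\bar{\underline f}_n=\sum_{i,j}\phi_i\theta_j\,\partial_i\partial_jf_{n+2}$. Power sums: $p_n=\sum_ix_i^n$ for $n\ge1$, $p_0:=0$; for $n\ge0$: $\bar p_n=\sum_i\phi_ix_i^n$, $\underline p_n=\sum_i\theta_ix_i^n$, $\bar{\underline p}_n=\sum_i\phi_i\theta_ix_i^n$. *)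

theory Defs
  imports "HOL-Analysis.Analysis" "HOL-Library.FuncSet"
begin

text \<open>
An element f :: sga is a formal power series in a commuting variable t whose
coefficients lie in the Grassmann (exterior) algebra over the reals generated by
anticommuting generators indexed by natural numbers:
  generator 0 = tau-bar, 1 = tau-underline, 2i+2 = phi_i, 2i+3 = theta_i.
f a U is the coefficient of t^a e_U, where e_U is the product of the generators
in U in increasing order.  The commuting variables x_i are real parameters.
\<close>

type_synonym sga = "nat \<Rightarrow> nat set \<Rightarrow> real"

definition inv_count :: "nat set \<Rightarrow> nat set \<Rightarrow> nat" where
  "inv_count S T = card {(s, t). s \<in> S \<and> t \<in> T \<and> t < s}"

text \<open>Product: e_S e_T = (-1)^(inversions) e_(S union T) if S, T disjoint, 0 otherwise.\<close>
definition smul :: "sga \<Rightarrow> sga \<Rightarrow> sga" where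
  "smul f g = (\<lambda>a U. \<Sum>b\<le>a. \<Sum>S\<in>Pow U.
       (-1) ^ inv_count S (U - S) * f b S * g (a - b) (U - S))"

definition sone :: sga where
  "sone = (\<lambda>a U. if a = 0 \<and> U = {} then 1 else 0)"

definition szero :: sga where
  "szero = (\<lambda>a U. 0)"

definition sadd :: "sga \<Rightarrow> sga \<Rightarrow> sga" where
  "sadd f g = (\<lambda>a U. f a U + g a U)"

definition sdiff :: "sga \<Rightarrow> sga \<Rightarrow> sga" where
  "sdiff f g = (\<lambda>a U. f a U - g a U)"

definition sscal :: "real \<Rightarrow> sga \<Rightarrow> sga" where
  "sscal c f = (\<lambda>a U. c * f a U)"

definition ssum :: "(nat \<Rightarrow> sga) \<Rightarrow> nat set \<Rightarrow> sga" where
  "ssum f A = (\<lambda>a U. \<Sum>i\<in>A. f i a U)"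

definition sgen :: "nat \<Rightarrow> sga" where
  "sgen k = (\<lambda>a U. if a = 0 \<and> U = {k} then 1 else 0)"

definition svar_t :: sga where
  "svar_t = (\<lambda>a U. if a = 1 \<and> U = {} then 1 else 0)"

definition gtauB :: sga where "gtauB = sgen 0"
definition gtauU :: sga where "gtauU = sgen 1"
definition gphi :: "nat \<Rightarrow> sga" where "gphi i = sgen (2 * i + 2)"
definition gtheta :: "nat \<Rightarrow> sga" where "gtheta i = sgen (2 * i + 3)"

fun sprod :: "(nat \<Rightarrow> sga) \<Rightarrow> nat \<Rightarrow> sga" where
  "sprod f 0 = sone"
| "sprod f (Suc n) = smul (sprod f n) (f n)"

fun spow :: "sga \<Rightarrow> nat \<Rightarrow> sga" where
  "spow u 0 = sone"
| "spow u (Suc k) = smul (spow u k) u"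

text \<open>Formal geometric series (1 - u)^(-1) = sum_k u^k, for u without constant term
  (total degree in t and generators at least 1); then u^k contributes to the
  coefficient of t^a e_U only for k \<le> a + card U, so the truncation is exact.\<close>
definition sgeom :: "sga \<Rightarrow> sga" where
  "sgeom u = (\<lambda>a U. \<Sum>k\<le>a + card U. spow u k a U)"

text \<open>Euler operator: multiplies t^a taubar^b tauunder^c (...) by a + b + c.\<close>
definition euler_op :: "sga \<Rightarrow> sga" where
  "euler_op f = (\<lambda>a U. real (a + card (U \<inter> {0, 1})) * f a U)"

text \<open>c * (t x_i + taubar phi_i + tauunder theta_i); c = -1 realises the substitution
  (t, taubar, tauunder) \<mapsto> (-t, -taubar, -tauunder).\<close>
definition uvar :: "real \<Rightarrow> (nat \<Rightarrow> real) \<Rightarrow> nat \<Rightarrow> sga" where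
  "uvar c x i = sscal c (sadd (sscal (x i) svar_t)
                    (sadd (smul gtauB (gphi i)) (smul gtauU (gtheta i))))"

definition GH :: "nat \<Rightarrow> (nat \<Rightarrow> real) \<Rightarrow> sga" where
  "GH N x = sprod (\<lambda>i. sgeom (uvar 1 x i)) N"

definition GE :: "nat \<Rightarrow> (nat \<Rightarrow> real) \<Rightarrow> real \<Rightarrow> sga" where
  "GE N x c = sprod (\<lambda>i. sadd sone (uvar c x i)) N"

definition GP :: "nat \<Rightarrow> (nat \<Rightarrow> real) \<Rightarrow> real \<Rightarrow> sga" where
  "GP N x c = ssum (\<lambda>i. smul (uvar c x i) (sgeom (uvar c x i))) {..<N}"

definition hsym :: "nat \<Rightarrow> nat \<Rightarrow> (nat \<Rightarrow> real) \<Rightarrow> real" where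
  "hsym N n x = (\<Sum>\<alpha>\<in>{\<alpha> \<in> {..<N} \<rightarrow>\<^sub>E {..n}. sum \<alpha> {..<N} = n}. \<Prod>i<N. x i ^ \<alpha> i)"

definition esym :: "nat \<Rightarrow> nat \<Rightarrow> (nat \<Rightarrow> real) \<Rightarrow> real" where
  "esym N n x = (\<Sum>S\<in>{S. S \<subseteq> {..<N} \<and> card S = n}. \<Prod>i\<in>S. x i)"

definition psym :: "nat \<Rightarrow> nat \<Rightarrow> (nat \<Rightarrow> real) \<Rightarrow> real" where
  "psym N n x = (if n = 0 then 0 else \<Sum>i<N. x i ^ n)"

definition pd :: "nat \<Rightarrow> ((nat \<Rightarrow> real) \<Rightarrow> real) \<Rightarrow> (nat \<Rightarrow> real) \<Rightarrow> real" where
  "pd i F x = deriv (\<lambda>y. F (x(i := y))) (x i)"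

text \<open>f-bar (G = gphi) / f-underline (G = gtheta): sum_i G_i d_i f_(n+1).\<close>
definition glin :: "(nat \<Rightarrow> sga) \<Rightarrow> (nat \<Rightarrow> nat \<Rightarrow> (nat \<Rightarrow> real) \<Rightarrow> real)
    \<Rightarrow> nat \<Rightarrow> nat \<Rightarrow> (nat \<Rightarrow> real) \<Rightarrow> sga" where
  "glin G F N n x = ssum (\<lambda>i. sscal (pd i (F N (n + 1)) x) (G i)) {..<N}"

text \<open>f-bar-underline: sum_(i,j) phi_i theta_j d_i d_j f_(n+2).\<close>
definition gbu :: "(nat \<Rightarrow> nat \<Rightarrow> (nat \<Rightarrow> real) \<Rightarrow> real)
    \<Rightarrow> nat \<Rightarrow> nat \<Rightarrow> (nat \<Rightarrow> real) \<Rightarrow> sga" where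
  "gbu F N n x = ssum (\<lambda>i. ssum (\<lambda>j.
       sscal (pd i (pd j (F N (n + 2))) x) (smul (gphi i) (gtheta j))) {..<N}) {..<N}"

text \<open>p-bar (G = gphi) / p-underline (G = gtheta): sum_i G_i x_i^n.\<close>
definition plin :: "(nat \<Rightarrow> sga) \<Rightarrow> nat \<Rightarrow> nat \<Rightarrow> (nat \<Rightarrow> real) \<Rightarrow> sga" where
  "plin G N n x = ssum (\<lambda>i. sscal (x i ^ n) (G i)) {..<N}"

definition pbu :: "nat \<Rightarrow> nat \<Rightarrow> (nat \<Rightarrow> real) \<Rightarrow> sga" where
  "pbu N n x = ssum (\<lambda>i. sscal (x i ^ n) (smul (gphi i) (gtheta i))) {..<N}"

end

theory Submission
  imports Defs "HOL-Computational_Algebra.Formal_Power_Series"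
begin


definition sg :: "nat set \<Rightarrow> nat set \<Rightarrow> real" where
  "sg S T = (-1) ^ inv_count S T"

lemma inv_count_Un_left:
  assumes "finite A" "finite B" "finite C" "A \<inter> B = {}"
  shows "inv_count (A \<union> B) C = inv_count A C + inv_count B C"
proof -
  have eq: "{(s, t). s \<in> A \<union> B \<and> t \<in> C \<and> t < s} =
        {(s, t). s \<in> A \<and> t \<in> C \<and> t < s} \<union> {(s, t). s \<in> B \<and> t \<in> C \<and> t < s}" by auto
  moreover have "finite {(s, t). s \<in> A \<and> t \<in> C \<and> t < s}"
    by (rule finite_subset[of _ "A \<times> C"]) (use assms in auto)
  moreover have "finite {(s, t). s \<in> B \<and> t \<in> C \<and> t < s}"
    by (rule finite_subset[of _ "B \<times> C"]) (use assms in auto)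
  ultimately show ?thesis unfolding inv_count_def
    by (subst eq, intro card_Un_disjoint) (use assms in auto)
qed

lemma inv_count_Un_right:
  assumes "finite A" "finite B" "finite C" "B \<inter> C = {}"
  shows "inv_count A (B \<union> C) = inv_count A B + inv_count A C"
proof -
  have eq: "{(s, t). s \<in> A \<and> t \<in> B \<union> C \<and> t < s} =
        {(s, t). s \<in> A \<and> t \<in> B \<and> t < s} \<union> {(s, t). s \<in> A \<and> t \<in> C \<and> t < s}" by auto
  moreover have "finite {(s, t). s \<in> A \<and> t \<in> B \<and> t < s}"
    by (rule finite_subset[of _ "A \<times> B"]) (use assms in auto)
  moreover have "finite {(s, t). s \<in> A \<and> t \<in> C \<and> t < s}"
    by (rule finite_subset[of _ "A \<times> C"]) (use assms in auto)
  ultimately show ?thesis unfolding inv_count_def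
    by (subst eq, intro card_Un_disjoint) (use assms in auto)
qed

lemma inv_count_swap:
  assumes "finite A" "finite B" "A \<inter> B = {}"
  shows "inv_count A B + inv_count B A = card A * card B"
proof -
  have e: "A \<times> B = {(s, t). s \<in> A \<and> t \<in> B \<and> t < s} \<union> (\<lambda>(t,s). (s,t)) ` {(s, t). s \<in> B \<and> t \<in> A \<and> t < s}"
    using assms by (auto simp: image_iff)
  have f1: "finite {(s, t). s \<in> A \<and> t \<in> B \<and> t < s}"
    by (rule finite_subset[of _ "A \<times> B"]) (use assms in auto)
  have f2: "finite {(s, t). s \<in> B \<and> t \<in> A \<and> t < s}"
    by (rule finite_subset[of _ "B \<times> A"]) (use assms in auto)
  have inj: "inj_on (\<lambda>(t,s). (s,t)) X" for X :: "(nat \<times> nat) set" by (auto simp: inj_on_def)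
  have "card (A \<times> B) = inv_count A B + inv_count B A"
    unfolding e inv_count_def
    by (subst card_Un_disjoint) (use f1 f2 in \<open>auto simp: card_image[OF inj]\<close>)
  thus ?thesis by (simp add: card_cartesian_product)
qed

lemma sg_swap:
  assumes "finite A" "finite B" "A \<inter> B = {}"
  shows "sg B A = (-1) ^ (card A * card B) * sg A B"
proof -
  have "sg A B * sg B A = (-1) ^ (card A * card B)"
    unfolding sg_def power_add[symmetric] using inv_count_swap[OF assms] by simp
  hence "sg A B * (sg A B * sg B A) = sg A B * (-1) ^ (card A * card B)" by simp
  moreover have "sg A B * sg A B = 1" unfolding sg_def power_add[symmetric]
    by (simp add: power_mult[symmetric] mult_2[symmetric] power_add power_mult)
  ultimately show ?thesis by (simp add: mult.assoc[symmetric] mult.commute)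
qed

definition D :: "nat \<Rightarrow> nat set \<Rightarrow> (nat \<times> nat set) set" where
  "D a U = {..a} \<times> Pow U"

lemma finite_D: "finite U \<Longrightarrow> finite (D a U)" by (simp add: D_def)

lemma smul_alt: "finite U \<Longrightarrow>
  smul f g a U = (\<Sum>(b,S)\<in>D a U. sg S (U-S) * f b S * g (a-b) (U-S))"
  unfolding smul_def D_def sg_def by (simp add: sum.cartesian_product)

lemma smul_inf: "infinite U \<Longrightarrow> smul f g a U = 0"
  unfolding smul_def by simp

lemma sg_assoc:
  assumes "finite U" "R \<subseteq> S" "S \<subseteq> U"
  shows "sg S (U-S) * sg R (S-R) = sg R (U-R) * sg (S-R) (U-S)"
proof -
  have fin: "finite S" "finite R"
    using finite_subset[OF assms(3) assms(1)] finite_subset[OF assms(2)] finite_subset[OF assms(3) assms(1)] by auto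
  have e1: "S = R \<union> (S - R)" using assms by auto
  have "inv_count (R \<union> (S - R)) (U-S) = inv_count R (U-S) + inv_count (S-R) (U-S)"
    by (rule inv_count_Un_left) (use fin assms in auto)
  hence 1: "inv_count S (U-S) = inv_count R (U-S) + inv_count (S-R) (U-S)"
    by (simp only: e1[symmetric])
  have e2: "U - R = (S-R) \<union> (U-S)" using assms by auto
  have "inv_count R ((S-R) \<union> (U-S)) = inv_count R (S-R) + inv_count R (U-S)"
    by (rule inv_count_Un_right) (use fin assms in auto)
  hence 2: "inv_count R (U-R) = inv_count R (S-R) + inv_count R (U-S)"
    by (simp only: e2[symmetric])
  have "inv_count S (U-S) + inv_count R (S-R) = inv_count R (U-R) + inv_count (S-R) (U-S)"
    using 1 2 by simp
  thus ?thesis unfolding sg_def power_add[symmetric] by (simp only:)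
qed

lemma smul_assoc: "smul (smul f g) h = smul f (smul g h)"
proof (intro ext)
  fix a U
  show "smul (smul f g) h a U = smul f (smul g h) a U"
  proof (cases "finite U")
    case False thus ?thesis by (simp add: smul_inf)
  next
    case fU: True
    define F where "F = (\<lambda>(b::nat,S::nat set) (c::nat,R::nat set).
        sg S (U-S) * sg R (S-R) * f c R * g (b-c) (S-R) * h (a-b) (U-S))"
    define G where "G = (\<lambda>(c::nat,R::nat set) (d::nat,T::nat set).
        sg R (U-R) * sg T (U-R-T) * f c R * g d T * h (a-c-d) (U-R-T))"
    have L1: "smul (smul f g) h a U = (\<Sum>x\<in>D a U. \<Sum>y\<in>(case x of (b,S) \<Rightarrow> D b S). F x y)"
      unfolding smul_alt[OF fU]
    proof (rule sum.cong[OF refl], clarify)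
      fix b S assume "(b,S) \<in> D a U"
      hence "S \<subseteq> U" by (simp add: D_def)
      hence fS: "finite S" using finite_subset[OF _ fU] by auto
      show "sg S (U-S) * smul f g b S * h (a-b) (U-S) = (\<Sum>y\<in>D b S. F (b,S) y)"
        unfolding smul_alt[OF fS] sum_distrib_left sum_distrib_right
        by (rule sum.cong[OF refl]) (auto simp: F_def)
    qed
    have R1: "smul f (smul g h) a U = (\<Sum>x\<in>D a U. \<Sum>y\<in>(case x of (c,R) \<Rightarrow> D (a-c) (U-R)). G x y)"
      unfolding smul_alt[OF fU]
    proof (rule sum.cong[OF refl], clarify)
      fix c R assume "(c,R) \<in> D a U"
      have fS: "finite (U-R)" using fU by auto
      show "sg R (U-R) * f c R * smul g h (a-c) (U-R) = (\<Sum>y\<in>D (a-c) (U-R). G (c,R) y)"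
        unfolding smul_alt[OF fS] sum_distrib_left sum_distrib_right
        by (rule sum.cong[OF refl]) (auto simp: G_def)
    qed
    have fin1: "finite (D a U)" "\<And>x. x \<in> D a U \<Longrightarrow> finite (case x of (b,S) \<Rightarrow> D b S)"
      using fU finite_subset[OF _ fU] by (auto simp: D_def)
    have fin2: "\<And>x. x \<in> D a U \<Longrightarrow> finite (case x of (c,R) \<Rightarrow> D (a-c) (U-R))"
      using fU by (auto simp: D_def)
    have "smul (smul f g) h a U = (\<Sum>z\<in>Sigma (D a U) (\<lambda>x. case x of (b,S) \<Rightarrow> D b S). case_prod F z)"
      unfolding L1 by (rule sum.Sigma) (use fin1 in auto)
    also have "\<dots> = (\<Sum>z\<in>Sigma (D a U) (\<lambda>x. case x of (c,R) \<Rightarrow> D (a-c) (U-R)). case_prod G z)"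
      apply (rule sum.reindex_bij_witness[where i = "\<lambda>((c,R),(d,T)). ((c+d, R\<union>T),(c,R))"
                                         and j = "\<lambda>((b,S),(c,R)). ((c,R),(b-c,S-R))"])
      subgoal by (auto simp: D_def)
      subgoal by (auto simp: D_def)
      subgoal by (auto simp: D_def)
      subgoal by (auto simp: D_def)
      subgoal for z
      proof -
        assume "z \<in> Sigma (D a U) (\<lambda>x. case x of (b,S) \<Rightarrow> D b S)"
        then obtain b S c R where zz: "z = ((b,S),(c,R))" "b \<le> a" "S \<subseteq> U" "c \<le> b" "R \<subseteq> S"
          by (auto simp: D_def)
        have s: "sg S (U-S) * sg R (S-R) = sg R (U-R) * sg (S-R) (U-S)"
          using sg_assoc[OF fU zz(5) zz(3)] .
        have e1: "U - R - (S - R) = U - S" using zz by auto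
        have e2: "a - c - (b - c) = a - b" using zz by auto
        show ?thesis using zz s unfolding F_def G_def by (simp add: e1 e2 mult_ac)
      qed
      done
    also have "\<dots> = smul f (smul g h) a U"
      unfolding R1 by (rule sum.Sigma[symmetric]) (use fin1 fin2 in auto)
    finally show ?thesis .
  qed
qed

lemma smul_sadd_left: "smul (sadd f g) h = sadd (smul f h) (smul g h)"
  unfolding smul_def sadd_def by (simp add: algebra_simps sum.distrib)

lemma smul_sadd_right: "smul h (sadd f g) = sadd (smul h f) (smul h g)"
  unfolding smul_def sadd_def by (simp add: algebra_simps sum.distrib)

lemma smul_sdiff_left: "smul (sdiff f g) h = sdiff (smul f h) (smul g h)"
  unfolding smul_def sdiff_def by (simp add: algebra_simps sum_subtractf)

lemma smul_sdiff_right: "smul h (sdiff f g) = sdiff (smul h f) (smul h g)"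
  unfolding smul_def sdiff_def by (simp add: algebra_simps sum_subtractf)

lemma smul_sscal_left: "smul (sscal c f) h = sscal c (smul f h)"
  unfolding smul_def sscal_def by (simp add: algebra_simps sum_distrib_left)

lemma smul_sscal_right: "smul h (sscal c f) = sscal c (smul h f)"
  unfolding smul_def sscal_def by (simp add: algebra_simps sum_distrib_left)

lemma smul_szero_left: "smul szero h = szero"
  unfolding smul_def szero_def by simp

lemma smul_szero_right: "smul h szero = szero"
  unfolding smul_def szero_def by simp

definition fsupp :: "sga \<Rightarrow> bool" where
  "fsupp f \<longleftrightarrow> (\<forall>a U. f a U \<noteq> 0 \<longrightarrow> finite U)"

definition evn :: "sga \<Rightarrow> bool" where
  "evn f \<longleftrightarrow> (\<forall>a U. f a U \<noteq> 0 \<longrightarrow> finite U \<and> even (card U))"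

lemma sg_empty_left: "sg {} T = 1" by (simp add: sg_def inv_count_def)
lemma sg_empty_right: "sg S {} = 1" by (simp add: sg_def inv_count_def)

lemma smul_sone_left: assumes "fsupp f" shows "smul sone f = f"
proof (intro ext)
  fix a U
  show "smul sone f a U = f a U"
  proof (cases "finite U")
    case False thus ?thesis using assms by (auto simp: smul_inf fsupp_def)
  next
    case True
    have "smul sone f a U = (\<Sum>b\<le>a. \<Sum>S\<in>Pow U. if b = 0 \<and> S = {} then f a U else 0)"
      unfolding smul_def sone_def by (intro sum.cong refl) (auto simp: sg_def[symmetric] sg_empty_left)
    also have "\<dots> = (\<Sum>b\<le>a. if b = 0 then f a U else 0)"
      using True by (intro sum.cong refl, case_tac "x = 0") (simp_all add: sum.delta')
    also have "\<dots> = f a U" by (simp add: sum.delta')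
    finally show ?thesis .
  qed
qed

lemma smul_sone_right: assumes "fsupp f" shows "smul f sone = f"
proof (intro ext)
  fix a U
  show "smul f sone a U = f a U"
  proof (cases "finite U")
    case False thus ?thesis using assms by (auto simp: smul_inf fsupp_def)
  next
    case True
    have "smul f sone a U = (\<Sum>b\<le>a. \<Sum>S\<in>Pow U. if b = a \<and> S = U then f a U else 0)"
      unfolding smul_def sone_def by (intro sum.cong refl) (auto simp: sg_def[symmetric] sg_empty_right)
    also have "\<dots> = (\<Sum>b\<le>a. if b = a then f a U else 0)"
      using True by (intro sum.cong refl, case_tac "x = a") (simp_all add: sum.delta')
    also have "\<dots> = f a U" by (simp add: sum.delta')
    finally show ?thesis .
  qed
qed

lemma smul_comm_evn:
  assumes "evn f" shows "smul f g = smul g f"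
proof (intro ext)
  fix a U
  show "smul f g a U = smul g f a U"
  proof (cases "finite U")
    case False thus ?thesis by (simp add: smul_inf)
  next
    case fU: True
    have "smul g f a U = (\<Sum>(b,S)\<in>D a U. sg (U-S) S * g (a-b) (U-S) * f b S)"
      unfolding smul_alt[OF fU]
      apply (rule sum.reindex_bij_witness[where i = "\<lambda>(b,S). (a-b, U-S)" and j = "\<lambda>(b,S). (a-b, U-S)"])
      apply (auto simp: D_def double_diff)
      done
    also have "\<dots> = (\<Sum>(b,S)\<in>D a U. sg S (U-S) * f b S * g (a-b) (U-S))"
    proof (rule sum.cong[OF refl], clarify)
      fix b S assume "(b,S) \<in> D a U"
      hence SU: "S \<subseteq> U" by (simp add: D_def)
      show "sg (U-S) S * g (a-b) (U-S) * f b S = sg S (U-S) * f b S * g (a-b) (U-S)"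
      proof (cases "f b S = 0")
        case True thus ?thesis by simp
      next
        case False
        hence "even (card S)" "finite S" using assms by (auto simp: evn_def)
        moreover have "sg (U-S) S = (-1) ^ (card S * card (U-S)) * sg S (U-S)"
          by (rule sg_swap) (use fU SU finite_subset in auto)
        ultimately show ?thesis by simp
      qed
    qed
    finally show ?thesis unfolding smul_alt[OF fU] by simp
  qed
qed


lemma smul_nonzero:
  assumes "smul f g a U \<noteq> 0"
  shows "finite U \<and> (\<exists>b S. b \<le> a \<and> S \<subseteq> U \<and> f b S \<noteq> 0 \<and> g (a-b) (U-S) \<noteq> 0)"
proof -
  have fU: "finite U" using assms smul_inf by blast
  from assms obtain b S where "b \<le> a" "S \<subseteq> U" "sg S (U-S) * f b S * g (a-b) (U-S) \<noteq> 0"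
    unfolding smul_alt[OF fU] D_def by (auto elim!: sum.not_neutral_contains_not_neutral)
  thus ?thesis using fU by auto
qed

lemma evn_szero: "evn szero" by (simp add: evn_def szero_def)
lemma evn_sone: "evn sone" by (simp add: evn_def sone_def)
lemma evn_sadd: "evn f \<Longrightarrow> evn g \<Longrightarrow> evn (sadd f g)"
  unfolding evn_def sadd_def by (metis add.right_neutral add_0)
lemma evn_sdiff: "evn f \<Longrightarrow> evn g \<Longrightarrow> evn (sdiff f g)"
  unfolding evn_def sdiff_def by (metis diff_zero diff_self)
lemma evn_sscal: "evn f \<Longrightarrow> evn (sscal c f)" by (auto simp: evn_def sscal_def)
lemma evn_smul: assumes "evn f" "evn g" shows "evn (smul f g)"
  unfolding evn_def
proof (intro allI impI)
  fix a U assume "smul f g a U \<noteq> 0"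
  from smul_nonzero[OF this] obtain b S where fU: "finite U" and bS: "S \<subseteq> U" "f b S \<noteq> 0" "g (a-b) (U-S) \<noteq> 0"
    by blast
  have "even (card S)" "even (card (U-S))" using bS assms by (auto simp: evn_def)
  moreover have "card U = card S + card (U - S)"
    using card_Diff_subset[OF finite_subset[OF bS(1) fU] bS(1)] card_mono[OF fU bS(1)] by simp
  ultimately show "finite U \<and> even (card U)" using fU by simp
qed

lemma evn_fsupp: "evn f \<Longrightarrow> fsupp f" by (auto simp: evn_def fsupp_def)

typedef ev = "{f::sga. evn f}" morphisms Rep_ev Abs_ev
  by (rule exI[of _ szero]) (simp add: evn_szero)

lemma evn_Rep: "evn (Rep_ev x)" using Rep_ev by simp

instantiation ev :: comm_ring_1
begin
definition "zero_ev = Abs_ev szero"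
definition "one_ev = Abs_ev sone"
definition "plus_ev x y = Abs_ev (sadd (Rep_ev x) (Rep_ev y))"
definition "minus_ev x y = Abs_ev (sdiff (Rep_ev x) (Rep_ev y))"
definition "uminus_ev x = Abs_ev (sscal (-1) (Rep_ev x))"
definition "times_ev x y = Abs_ev (smul (Rep_ev x) (Rep_ev y))"

lemma Rep_zero: "Rep_ev 0 = szero" unfolding zero_ev_def by (simp add: Abs_ev_inverse evn_szero)
lemma Rep_one: "Rep_ev 1 = sone" unfolding one_ev_def by (simp add: Abs_ev_inverse evn_sone)
lemma Rep_plus: "Rep_ev (x + y) = sadd (Rep_ev x) (Rep_ev y)"
  unfolding plus_ev_def by (simp add: Abs_ev_inverse evn_sadd evn_Rep)
lemma Rep_minus: "Rep_ev (x - y) = sdiff (Rep_ev x) (Rep_ev y)"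
  unfolding minus_ev_def by (simp add: Abs_ev_inverse evn_sdiff evn_Rep)
lemma Rep_uminus: "Rep_ev (- x) = sscal (-1) (Rep_ev x)"
  unfolding uminus_ev_def by (simp add: Abs_ev_inverse evn_sscal evn_Rep)
lemma Rep_times: "Rep_ev (x * y) = smul (Rep_ev x) (Rep_ev y)"
  unfolding times_ev_def by (simp add: Abs_ev_inverse evn_smul evn_Rep)

instance
proof
  fix a b c :: ev
  show "a * b * c = a * (b * c)" by (simp add: Rep_ev_inject[symmetric] Rep_times smul_assoc)
  show "a * b = b * a" unfolding Rep_ev_inject[symmetric] Rep_times by (rule smul_comm_evn[OF evn_Rep])
  show "1 * a = a" by (simp add: Rep_ev_inject[symmetric] Rep_times Rep_one smul_sone_left evn_fsupp evn_Rep)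
  show "a + b + c = a + (b + c)" by (simp add: Rep_ev_inject[symmetric] Rep_plus sadd_def add.assoc)
  show "a + b = b + a" by (simp add: Rep_ev_inject[symmetric] Rep_plus sadd_def add.commute)
  show "0 + a = a" by (simp add: Rep_ev_inject[symmetric] Rep_plus Rep_zero sadd_def szero_def)
  show "- a + a = 0" by (simp add: Rep_ev_inject[symmetric] Rep_plus Rep_zero Rep_uminus sadd_def szero_def sscal_def)
  show "a - b = a + - b" by (simp add: Rep_ev_inject[symmetric] Rep_plus Rep_minus Rep_uminus sadd_def sdiff_def sscal_def)
  show "(a + b) * c = a * c + b * c" by (simp add: Rep_ev_inject[symmetric] Rep_plus Rep_times smul_sadd_left)
  show "(0::ev) \<noteq> 1"
  proof
    assume "(0::ev) = 1"
    hence "Rep_ev 0 0 {} = Rep_ev 1 0 {}" by simp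
    thus False by (simp add: Rep_zero Rep_one szero_def sone_def)
  qed
qed
end




lemma Abs_ev_eq: "evn f \<Longrightarrow> Abs_ev f = y \<longleftrightarrow> f = Rep_ev y"
  by (metis Abs_ev_inverse Rep_ev_inverse mem_Collect_eq)

lemma Rep_sum: "Rep_ev (\<Sum>i\<in>A. f i) = ssum (\<lambda>i. Rep_ev (f i)) A"
proof (induction A rule: infinite_finite_induct)
  case (infinite A) thus ?case by (simp add: Rep_zero ssum_def szero_def)
next
  case empty thus ?case by (simp add: Rep_zero ssum_def szero_def)
next
  case (insert a A) thus ?case by (simp add: Rep_plus ssum_def sadd_def)
qed

lemma sprod_Rep: assumes "\<And>i. evn (f i)" shows "sprod f N = Rep_ev (\<Prod>i<N. Abs_ev (f i))"
proof (induction N)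
  case 0 thus ?case by (simp add: Rep_one)
next
  case (Suc N) thus ?case by (simp add: Rep_times Abs_ev_inverse assms)
qed

lemma smul_sgen_supp: "smul (sgen p) (sgen q) a U \<noteq> 0 \<Longrightarrow> a = 0 \<and> U = {p,q} \<and> p \<noteq> q"
proof -
  assume "smul (sgen p) (sgen q) a U \<noteq> 0"
  from smul_nonzero[OF this] obtain b S where "b \<le> a" "S \<subseteq> U" "sgen p b S \<noteq> 0" "sgen q (a-b) (U-S) \<noteq> 0"
    by blast
  hence "b = 0" "S = {p}" "a - b = 0" "U - S = {q}" by (auto simp: sgen_def split: if_splits)
  thus ?thesis using \<open>S \<subseteq> U\<close> \<open>b \<le> a\<close> by auto
qed

lemma uvar_supp:
  assumes "uvar c x i a U \<noteq> 0"
  shows "(a = 1 \<and> U = {}) \<or> (a = 0 \<and> U = {0, 2*i+2}) \<or> (a = 0 \<and> U = {1, 2*i+3})"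
proof -
  from assms have "svar_t a U \<noteq> 0 \<or> smul gtauB (gphi i) a U \<noteq> 0 \<or> smul gtauU (gtheta i) a U \<noteq> 0"
    unfolding uvar_def sscal_def sadd_def by auto
  thus ?thesis
    unfolding gtauB_def gtauU_def gphi_def gtheta_def
    by (auto simp: svar_t_def split: if_splits dest!: smul_sgen_supp)
qed

lemma evn_uvar: "evn (uvar c x i)"
  unfolding evn_def by (auto dest!: uvar_supp)

lemma uvar_const: "uvar c x i 0 {} = 0"
  using uvar_supp[of c x i 0 "{}"] by auto

lemma euler_uvar: "euler_op (uvar c x i) = uvar c x i"
proof (intro ext)
  fix a U
  show "euler_op (uvar c x i) a U = uvar c x i a U"
  proof (cases "uvar c x i a U = 0")
    case True thus ?thesis by (simp add: euler_op_def)
  next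
    case False
    from uvar_supp[OF this] have "a + card (U \<inter> {0,1}) = 1"
    proof (elim disjE conjE)
      assume "a = 0" "U = {0, 2*i+2}"
      moreover have "{0, 2*i+2} \<inter> {0,1} = {0::nat}" by auto
      ultimately show ?thesis by simp
    next
      assume "a = 0" "U = {1, 2*i+3}"
      moreover have "{1, 2*i+3} \<inter> {0,1} = {1::nat}" by auto
      ultimately show ?thesis by simp
    qed auto
    thus ?thesis by (simp add: euler_op_def)
  qed
qed

lemma uvar_neg: "uvar (-1) x i = sscal (-1) (uvar 1 x i)"
  by (simp add: uvar_def sscal_def)

lemma card_Int01:
  assumes "finite U" "S \<subseteq> U"
  shows "card (U \<inter> {0,1}) = card (S \<inter> {0,1}) + card ((U - S) \<inter> {0,1::nat})"
proof -
  have "U \<inter> {0,1} = (S \<inter> {0,1}) \<union> ((U - S) \<inter> {0,1})" using assms by auto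
  moreover have "(S \<inter> {0,1}) \<inter> ((U - S) \<inter> {0,1}) = {}" by auto
  ultimately show ?thesis by (simp add: card_Un_disjoint)
qed

lemma euler_smul: "euler_op (smul f g) = sadd (smul (euler_op f) g) (smul f (euler_op g))"
proof (intro ext)
  fix a U
  show "euler_op (smul f g) a U = sadd (smul (euler_op f) g) (smul f (euler_op g)) a U"
  proof (cases "finite U")
    case False thus ?thesis by (simp add: euler_op_def sadd_def smul_inf)
  next
    case fU: True
    show ?thesis
      unfolding sadd_def smul_alt[OF fU] euler_op_def sum_distrib_left sum.distrib[symmetric]
    proof (rule sum.cong[OF refl], clarify)
      fix b S assume "(b,S) \<in> D a U"
      hence "b \<le> a" "S \<subseteq> U" by (auto simp: D_def)
      hence "real (a + card (U \<inter> {0,1})) = real (b + card (S \<inter> {0,1})) + real (a - b + card ((U-S) \<inter> {0,1}))"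
        using card_Int01[OF fU] by simp
      thus "real (a + card (U \<inter> {0, 1})) * (sg S (U - S) * f b S * g (a - b) (U - S)) =
         sg S (U - S) * (real (b + card (S \<inter> {0, 1})) * f b S) * g (a - b) (U - S) +
         sg S (U - S) * f b S * (real (a - b + card ((U - S) \<inter> {0, 1})) * g (a - b) (U - S))"
        by (simp add: algebra_simps)
    qed
  qed
qed

lemma evn_euler: "evn f \<Longrightarrow> evn (euler_op f)"
  by (auto simp: evn_def euler_op_def)

definition EE :: "ev \<Rightarrow> ev" where "EE y = Abs_ev (euler_op (Rep_ev y))"

lemma Rep_EE: "Rep_ev (EE y) = euler_op (Rep_ev y)"
  unfolding EE_def by (simp add: Abs_ev_inverse evn_euler evn_Rep)

lemma EE_times: "EE (y * z) = EE y * z + y * EE z"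
  by (simp add: Rep_ev_inject[symmetric] Rep_EE Rep_times Rep_plus euler_smul)

lemma EE_plus: "EE (y + z) = EE y + EE z"
  by (simp add: Rep_ev_inject[symmetric] Rep_EE Rep_plus euler_op_def sadd_def algebra_simps)

lemma EE_minus: "EE (y - z) = EE y - EE z"
  by (simp add: Rep_ev_inject[symmetric] Rep_EE Rep_minus euler_op_def sdiff_def algebra_simps)

lemma EE_uminus: "EE (- z) = - EE z"
  by (simp add: Rep_ev_inject[symmetric] Rep_EE Rep_uminus euler_op_def sscal_def algebra_simps)

lemma EE_one: "EE 1 = 0"
  by (simp add: Rep_ev_inject[symmetric] Rep_EE Rep_one Rep_zero euler_op_def sone_def szero_def fun_eq_iff)

lemma EE_sum: "EE (\<Sum>i\<in>A. f i) = (\<Sum>i\<in>A. EE (f i))"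
proof (induction A rule: infinite_finite_induct)
  case (infinite A) thus ?case by (simp add: Rep_ev_inject[symmetric] Rep_EE Rep_zero euler_op_def szero_def)
next
  case empty thus ?case by (simp add: Rep_ev_inject[symmetric] Rep_EE Rep_zero euler_op_def szero_def)
next
  case (insert a A) thus ?case by (simp add: EE_plus)
qed

lemma EE_prod: "finite A \<Longrightarrow> EE (\<Prod>i\<in>A. f i) = (\<Sum>i\<in>A. EE (f i) * (\<Prod>j\<in>A-{i}. f j))"
proof (induction A rule: finite_induct)
  case empty thus ?case by (simp add: EE_one)
next
  case (insert a A)
  have 1: "(\<Prod>j\<in>insert a A - {a}. f j) = (\<Prod>j\<in>A. f j)" using insert by (simp add: insert_Diff_if)
  have 2: "(\<Prod>j\<in>insert a A - {i}. f j) = f a * (\<Prod>j\<in>A-{i}. f j)" if "i \<in> A" for i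
  proof -
    have "insert a A - {i} = insert a (A - {i})" using that insert by auto
    thus ?thesis using insert by simp
  qed
  have "EE (\<Prod>i\<in>insert a A. f i) = EE (f a) * (\<Prod>i\<in>A. f i) + f a * (\<Sum>i\<in>A. EE (f i) * (\<Prod>j\<in>A-{i}. f j))"
    using insert by (simp add: EE_times)
  also have "\<dots> = (\<Sum>i\<in>insert a A. EE (f i) * (\<Prod>j\<in>insert a A-{i}. f j))"
    using insert by (simp add: 1 2 sum_distrib_left mult_ac cong: sum.cong)
  finally show ?case .
qed


lemma spow_inf: "infinite U \<Longrightarrow> spow u k a U = 0"
  by (cases k) (auto simp: sone_def smul_inf)

lemma evn_spow: "evn u \<Longrightarrow> evn (spow u k)"
  by (induction k) (auto simp: evn_sone evn_smul)

lemma spow_supp: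
  assumes "u 0 {} = 0"
  shows "spow u k a U \<noteq> 0 \<Longrightarrow> k \<le> a + card U"
proof (induction k arbitrary: a U)
  case 0 thus ?case by simp
next
  case (Suc k)
  from smul_nonzero[of "spow u k" u a U] Suc.prems obtain b S where
    fU: "finite U" and bS: "b \<le> a" "S \<subseteq> U" "spow u k b S \<noteq> 0" "u (a-b) (U-S) \<noteq> 0" by auto
  have "k \<le> b + card S" using Suc.IH bS by blast
  moreover have "a - b + card (U - S) \<noteq> 0"
  proof
    assume "a - b + card (U - S) = 0"
    hence h1: "a - b = 0" and h2: "U - S = {}" using fU by auto
    have "u (a-b) (U-S) = u 0 {}" by (simp only: h1 h2)
    thus False using bS(4) assms by simp
  qed
  moreover have "card U = card S + card (U - S)"
    using card_Diff_subset[OF finite_subset[OF bS(2) fU] bS(2)] card_mono[OF fU bS(2)] by simp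
  ultimately show ?case using bS(1) by simp
qed

lemma sgeom_trunc:
  assumes "u 0 {} = 0" "a + card U \<le> K"
  shows "sgeom u a U = (\<Sum>k\<le>K. spow u k a U)"
proof -
  have "(\<Sum>k\<le>K. spow u k a U) = (\<Sum>k\<le>a + card U. spow u k a U) + (\<Sum>k\<in>{..K} - {..a + card U}. spow u k a U)"
    using assms(2) by (subst sum.subset_diff[of "{..a + card U}"]) auto
  also have "(\<Sum>k\<in>{..K} - {..a + card U}. spow u k a U) = 0"
    by (rule sum.neutral) (use spow_supp[where u=u, OF assms(1)] in force)
  finally show ?thesis unfolding sgeom_def by simp
qed

lemma evn_sgeom: assumes "evn u" shows "evn (sgeom u)"
  unfolding evn_def
proof (intro allI impI)
  fix a U assume "sgeom u a U \<noteq> 0"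
  then obtain k where "spow u k a U \<noteq> 0" unfolding sgeom_def
    by (auto elim!: sum.not_neutral_contains_not_neutral)
  thus "finite U \<and> even (card U)" using evn_spow[OF assms] by (auto simp: evn_def)
qed

lemma sgeom_times_u:
  assumes "u 0 {} = 0" "finite U"
  shows "smul (sgeom u) u a U = (\<Sum>k\<le>a + card U. spow u (Suc k) a U)"
proof -
  define K where "K = a + card U"
  have "smul (sgeom u) u a U = (\<Sum>(b,S)\<in>D a U. sg S (U-S) * (\<Sum>k\<le>K. spow u k b S) * u (a-b) (U-S))"
    unfolding smul_alt[OF assms(2)]
  proof (rule sum.cong[OF refl], clarify)
    fix b S assume "(b,S) \<in> D a U"
    hence "b \<le> a" "S \<subseteq> U" by (auto simp: D_def)
    hence "b + card S \<le> K" unfolding K_def using card_mono[OF assms(2)] by (simp add: add_mono)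
    thus "sg S (U-S) * sgeom u b S * u (a-b) (U-S) = sg S (U-S) * (\<Sum>k\<le>K. spow u k b S) * u (a-b) (U-S)"
      using sgeom_trunc[where u=u, OF assms(1)] by simp
  qed
  also have "\<dots> = (\<Sum>k\<le>K. \<Sum>(b,S)\<in>D a U. sg S (U-S) * spow u k b S * u (a-b) (U-S))"
    by (simp add: sum_distrib_left sum_distrib_right split_def sum.swap[of _ "D a U"])
  also have "\<dots> = (\<Sum>k\<le>K. spow u (Suc k) a U)"
    by (simp add: smul_alt[OF assms(2)])
  finally show ?thesis unfolding K_def .
qed

lemma sgeom_inv:
  assumes "evn u" "u 0 {} = 0"
  shows "smul (sgeom u) (sdiff sone u) = sone"
proof -
  have fs: "fsupp (sgeom u)" by (rule evn_fsupp[OF evn_sgeom[OF assms(1)]])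
  have "smul (sgeom u) (sdiff sone u) = sdiff (sgeom u) (smul (sgeom u) u)"
    by (simp add: smul_sdiff_right smul_sone_right[OF fs])
  also have "\<dots> = sone"
  proof (intro ext)
    fix a U
    show "sdiff (sgeom u) (smul (sgeom u) u) a U = sone a U"
    proof (cases "finite U")
      case False thus ?thesis using fs by (auto simp: sdiff_def smul_inf sone_def fsupp_def)
    next
      case True
      define K where "K = a + card U"
      have "spow u (Suc K) a U = 0" using spow_supp[where u=u, OF assms(2), of "Suc K" a U] K_def by auto
      moreover have "(\<Sum>k\<le>Suc K. spow u k a U) = spow u 0 a U + (\<Sum>k\<le>K. spow u (Suc k) a U)"
        by (rule sum.atMost_Suc_shift)
      moreover have "(\<Sum>k\<le>Suc K. spow u k a U) = (\<Sum>k\<le>K. spow u k a U) + spow u (Suc K) a U" by simp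
      ultimately have "(\<Sum>k\<le>K. spow u k a U) - (\<Sum>k\<le>K. spow u (Suc k) a U) = sone a U" by simp
      moreover have "sdiff (sgeom u) (smul (sgeom u) u) a U = (\<Sum>k\<le>K. spow u k a U) - (\<Sum>k\<le>K. spow u (Suc k) a U)"
        unfolding sdiff_def sgeom_times_u[where u=u, OF assms(2) True] K_def by (simp add: sgeom_def)
      ultimately show ?thesis by simp
    qed
  qed
  finally show ?thesis .
qed

definition UU :: "real \<Rightarrow> (nat \<Rightarrow> real) \<Rightarrow> nat \<Rightarrow> ev" where "UU c x i = Abs_ev (uvar c x i)"
definition GG :: "real \<Rightarrow> (nat \<Rightarrow> real) \<Rightarrow> nat \<Rightarrow> ev" where "GG c x i = Abs_ev (sgeom (uvar c x i))"

lemma Rep_UU: "Rep_ev (UU c x i) = uvar c x i"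
  unfolding UU_def by (simp add: Abs_ev_inverse evn_uvar)
lemma Rep_GG: "Rep_ev (GG c x i) = sgeom (uvar c x i)"
  unfolding GG_def by (simp add: Abs_ev_inverse evn_uvar evn_sgeom)

lemma GG_inv: "GG c x i * (1 - UU c x i) = 1"
  by (simp add: Rep_ev_inject[symmetric] Rep_times Rep_minus Rep_one Rep_UU Rep_GG sgeom_inv evn_uvar uvar_const)

lemma UU_neg: "UU (-1) x i = - UU 1 x i"
  by (simp add: Rep_ev_inject[symmetric] Rep_UU Rep_uminus uvar_neg)

lemma EE_UU: "EE (UU c x i) = UU c x i"
  by (simp add: Rep_ev_inject[symmetric] Rep_UU Rep_EE euler_uvar)

lemma GH_Rep: "GH N x = Rep_ev (\<Prod>i<N. GG 1 x i)"
  unfolding GH_def GG_def by (rule sprod_Rep) (simp add: evn_uvar evn_sgeom)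

lemma GE_Rep: "GE N x c = Rep_ev (\<Prod>i<N. 1 + UU c x i)"
proof -
  have "GE N x c = Rep_ev (\<Prod>i<N. Abs_ev (sadd sone (uvar c x i)))"
    unfolding GE_def by (rule sprod_Rep) (simp add: evn_uvar evn_sadd evn_sone)
  also have "(\<lambda>i. Abs_ev (sadd sone (uvar c x i))) = (\<lambda>i. 1 + UU c x i)"
    by (simp add: fun_eq_iff Abs_ev_eq evn_uvar evn_sadd evn_sone Rep_plus Rep_one Rep_UU)
  finally show ?thesis .
qed

lemma GP_Rep: "GP N x c = Rep_ev (\<Sum>i<N. UU c x i * GG c x i)"
  unfolding GP_def Rep_sum by (simp add: Rep_times Rep_UU Rep_GG)

lemma EE_GG: "EE (GG c x i) = GG c x i * GG c x i * UU c x i"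
proof -
  let ?G = "GG c x i" and ?U = "UU c x i"
  have "EE (?G * (1 - ?U)) = 0" using GG_inv EE_one by simp
  hence "EE ?G * (1 - ?U) = ?G * ?U" by (simp add: EE_times EE_minus EE_one EE_UU algebra_simps)
  have "EE ?G = EE ?G * (?G * (1 - ?U))" using GG_inv[of c x i] by simp
  also have "\<dots> = ?G * (EE ?G * (1 - ?U))" by (simp add: mult_ac)
  also have "\<dots> = ?G * ?G * ?U" using \<open>EE ?G * (1 - ?U) = ?G * ?U\<close> by (simp add: mult_ac)
  finally show ?thesis .
qed

lemma item1: "smul (GH N x) (GE N x (-1)) = sone"
proof -
  have "(\<Prod>i<N. GG 1 x i) * (\<Prod>i<N. 1 + UU (-1) x i) = (\<Prod>i<N. GG 1 x i * (1 - UU 1 x i))"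
    by (simp add: prod.distrib UU_neg)
  also have "\<dots> = 1" by (simp add: GG_inv)
  finally show ?thesis unfolding GH_Rep GE_Rep Rep_times[symmetric] by (simp add: Rep_one)
qed

lemma item2: "smul (GH N x) (GP N x 1) = euler_op (GH N x)"
proof -
  let ?H = "\<Prod>i<N. GG 1 x i"
  have "EE ?H = (\<Sum>i<N. EE (GG 1 x i) * (\<Prod>j\<in>{..<N}-{i}. GG 1 x j))" by (simp add: EE_prod)
  also have "\<dots> = (\<Sum>i<N. UU 1 x i * GG 1 x i * ?H)"
  proof (rule sum.cong[OF refl])
    fix i assume "i \<in> {..<N}"
    hence "?H = GG 1 x i * (\<Prod>j\<in>{..<N}-{i}. GG 1 x j)" by (simp add: prod.remove)
    thus "EE (GG 1 x i) * (\<Prod>j\<in>{..<N}-{i}. GG 1 x j) = UU 1 x i * GG 1 x i * ?H"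
      by (simp add: EE_GG mult_ac)
  qed
  also have "\<dots> = ?H * (\<Sum>i<N. UU 1 x i * GG 1 x i)" by (simp add: sum_distrib_left mult_ac)
  finally show ?thesis unfolding GH_Rep GP_Rep Rep_times[symmetric] Rep_EE[symmetric] by simp
qed

lemma item3: "smul (GE N x 1) (GP N x (-1)) = sscal (-1) (euler_op (GE N x 1))"
proof -
  let ?E = "\<Prod>i<N. 1 + UU 1 x i"
  have inv: "(1 + UU 1 x i) * GG (-1) x i = 1" for i
    using GG_inv[of "-1" x i] by (simp add: UU_neg mult_ac)
  have "EE ?E = (\<Sum>i<N. EE (1 + UU 1 x i) * (\<Prod>j\<in>{..<N}-{i}. 1 + UU 1 x j))" by (simp add: EE_prod)
  also have "\<dots> = (\<Sum>i<N. UU 1 x i * (\<Prod>j\<in>{..<N}-{i}. 1 + UU 1 x j))"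
    by (simp add: EE_plus EE_one EE_UU)
  finally have 1: "EE ?E = \<dots>" .
  have "?E * (\<Sum>i<N. UU (-1) x i * GG (-1) x i) = - (\<Sum>i<N. UU 1 x i * (\<Prod>j\<in>{..<N}-{i}. 1 + UU 1 x j))"
    unfolding sum_distrib_left sum_negf[symmetric]
  proof (rule sum.cong[OF refl])
    fix i assume "i \<in> {..<N}"
    hence "?E = (1 + UU 1 x i) * (\<Prod>j\<in>{..<N}-{i}. 1 + UU 1 x j)" by (simp add: prod.remove)
    hence "?E * (UU (-1) x i * GG (-1) x i) = - (UU 1 x i * ((1 + UU 1 x i) * GG (-1) x i) * (\<Prod>j\<in>{..<N}-{i}. 1 + UU 1 x j))"
      by (simp add: UU_neg mult_ac)
    thus "?E * (UU (-1) x i * GG (-1) x i) = - (UU 1 x i * (\<Prod>j\<in>{..<N}-{i}. 1 + UU 1 x j))"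
      by (simp add: inv)
  qed
  hence "?E * (\<Sum>i<N. UU (-1) x i * GG (-1) x i) = - EE ?E" using 1 by simp
  thus ?thesis unfolding GE_Rep GP_Rep Rep_times[symmetric] Rep_EE[symmetric] Rep_uminus[symmetric] by simp
qed




inductive polyf :: "((nat \<Rightarrow> real) \<Rightarrow> real) \<Rightarrow> bool" where
  pconst: "polyf (\<lambda>x. c)"
| pcoord: "polyf (\<lambda>x. x k)"
| padd: "polyf f \<Longrightarrow> polyf g \<Longrightarrow> polyf (\<lambda>x. f x + g x)"
| pmult: "polyf f \<Longrightarrow> polyf g \<Longrightarrow> polyf (\<lambda>x. f x * g x)"

lemma polyf_deriv_ex:
  "polyf f \<Longrightarrow> \<exists>f'. polyf f' \<and> (\<forall>x. ((\<lambda>y. f (x(i:=y))) has_real_derivative f' x) (at (x i)))"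
proof (induction rule: polyf.induct)
  case (pconst c) thus ?case by (intro exI[of _ "\<lambda>x. 0"]) (auto intro: polyf.intros)
next
  case (pcoord k)
  show ?case
  proof (cases "k = i")
    case True thus ?thesis by (intro exI[of _ "\<lambda>x. 1"]) (auto intro: polyf.intros DERIV_ident)
  next
    case False thus ?thesis by (intro exI[of _ "\<lambda>x. 0"]) (auto intro: polyf.intros)
  qed
next
  case (padd f g)
  then obtain f' g' where "polyf f'" "polyf g'" and
    d1: "\<And>x. ((\<lambda>y. f (x(i:=y))) has_real_derivative f' x) (at (x i))" and
    d2: "\<And>x. ((\<lambda>y. g (x(i:=y))) has_real_derivative g' x) (at (x i))" by blast
  have der: "((\<lambda>y. f (x(i:=y)) + g (x(i:=y))) has_real_derivative f' x + g' x) (at (x i))" for x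
    using DERIV_add[OF d1[of x] d2[of x]] by simp
  have "polyf (\<lambda>x. f' x + g' x)"
    using \<open>polyf f'\<close> \<open>polyf g'\<close> by (intro polyf.padd)
  thus ?case
    by (intro exI[of _ "\<lambda>x. f' x + g' x"] conjI allI der)
next
  case (pmult f g)
  then obtain f' g' where "polyf f'" "polyf g'" and
    d1: "\<And>x. ((\<lambda>y. f (x(i:=y))) has_real_derivative f' x) (at (x i))" and
    d2: "\<And>x. ((\<lambda>y. g (x(i:=y))) has_real_derivative g' x) (at (x i))" by blast
  have der: "((\<lambda>y. f (x(i:=y)) * g (x(i:=y))) has_real_derivative f' x * g x + f x * g' x) (at (x i))" for x
    using DERIV_mult[OF d1[of x] d2[of x]] by (simp add: ac_simps)
  have "polyf (\<lambda>x. f' x * g x + f x * g' x)"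
    using \<open>polyf f\<close> \<open>polyf g\<close> \<open>polyf f'\<close> \<open>polyf g'\<close> by (intro polyf.padd polyf.pmult)
  thus ?case
    by (intro exI[of _ "\<lambda>x. f' x * g x + f x * g' x"] conjI allI der)
qed

lemma has_pd: "polyf f \<Longrightarrow> ((\<lambda>y. f (x(i:=y))) has_real_derivative pd i f x) (at (x i))"
proof -
  assume "polyf f"
  then obtain f' where "\<And>x. ((\<lambda>y. f (x(i:=y))) has_real_derivative f' x) (at (x i))"
    using polyf_deriv_ex by blast
  moreover from this have "pd i f x = f' x" unfolding pd_def by (rule DERIV_imp_deriv)
  ultimately show ?thesis by simp
qed

lemma polyf_pd: "polyf f \<Longrightarrow> polyf (pd i f)"
proof -
  assume "polyf f"
  then obtain f' where "polyf f'" "\<And>x. ((\<lambda>y. f (x(i:=y))) has_real_derivative f' x) (at (x i))"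
    using polyf_deriv_ex by blast
  moreover from this have "pd i f = f'" unfolding pd_def by (auto intro: DERIV_imp_deriv)
  ultimately show ?thesis by simp
qed

lemma pd_add: "polyf f \<Longrightarrow> polyf g \<Longrightarrow> pd i (\<lambda>x. f x + g x) x = pd i f x + pd i g x"
  unfolding pd_def[of i "\<lambda>x. f x + g x"] by (rule DERIV_imp_deriv) (auto intro: derivative_intros has_pd)

lemma pd_mult: "polyf f \<Longrightarrow> polyf g \<Longrightarrow> pd i (\<lambda>x. f x * g x) x = pd i f x * g x + f x * pd i g x"
proof -
  assume a: "polyf f" "polyf g"
  have "((\<lambda>y. f (x(i:=y)) * g (x(i:=y))) has_real_derivative pd i f x * g x + f x * pd i g x) (at (x i))"
    using DERIV_mult[OF has_pd[OF a(1), of x i] has_pd[OF a(2), of x i]] by (simp add: ac_simps)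
  thus ?thesis unfolding pd_def[of i "\<lambda>x. f x * g x"] by (rule DERIV_imp_deriv)
qed

lemma pd_const: "pd i (\<lambda>x. c) x = 0"
  unfolding pd_def by simp

lemma pd_coord: "pd i (\<lambda>x. x k) x = (if k = i then 1 else 0)"
  unfolding pd_def by auto

lemma polyf_sum: "(\<And>a. a \<in> A \<Longrightarrow> polyf (f a)) \<Longrightarrow> polyf (\<lambda>x. \<Sum>a\<in>A. f a x)"
proof (induction A rule: infinite_finite_induct)
  case (infinite A) thus ?case by (simp add: pconst)
next
  case empty thus ?case by (simp add: pconst)
next
  case (insert a A) thus ?case by (simp add: padd)
qed

lemma polyf_prod: "(\<And>a. a \<in> A \<Longrightarrow> polyf (f a)) \<Longrightarrow> polyf (\<lambda>x. \<Prod>a\<in>A. f a x)"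
proof (induction A rule: infinite_finite_induct)
  case (infinite A) thus ?case by (simp add: pconst)
next
  case empty thus ?case by (simp add: pconst)
next
  case (insert a A) thus ?case by (simp add: pmult)
qed

lemma polyf_power: "polyf f \<Longrightarrow> polyf (\<lambda>x. f x ^ n)"
  by (induction n) (auto intro: polyf.intros)

lemma polyf_diff: "polyf f \<Longrightarrow> polyf g \<Longrightarrow> polyf (\<lambda>x. f x - g x)"
proof -
  assume "polyf f" "polyf g"
  hence "polyf (\<lambda>x. f x + (-1) * g x)" by (intro padd pmult pconst)
  thus ?thesis by simp
qed

lemma pd_sum: "(\<And>a. a \<in> A \<Longrightarrow> polyf (f a)) \<Longrightarrow> pd i (\<lambda>x. \<Sum>a\<in>A. f a x) x = (\<Sum>a\<in>A. pd i (f a) x)"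
proof (induction A rule: infinite_finite_induct)
  case (infinite A) thus ?case by (simp add: pd_const)
next
  case empty thus ?case by (simp add: pd_const)
next
  case (insert a A)
  have "pd i (\<lambda>x. \<Sum>a\<in>insert a A. f a x) x = pd i (\<lambda>x. f a x + (\<Sum>a\<in>A. f a x)) x"
    using insert by simp
  also have "\<dots> = pd i (f a) x + pd i (\<lambda>x. \<Sum>a\<in>A. f a x) x"
    using insert by (intro pd_add polyf_sum) auto
  finally show ?case using insert by simp
qed

lemma pd_cmult: "polyf f \<Longrightarrow> pd i (\<lambda>x. c * f x) x = c * pd i f x"
  by (subst pd_mult) (auto simp: pd_const intro: pconst)

lemma pd_diff: "polyf f \<Longrightarrow> polyf g \<Longrightarrow> pd i (\<lambda>x. f x - g x) x = pd i f x - pd i g x"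
proof -
  assume a: "polyf f" "polyf g"
  have "pd i (\<lambda>x. f x + (-1) * g x) x = pd i f x + pd i (\<lambda>x. (-1) * g x) x"
    using a by (intro pd_add pmult pconst)
  thus ?thesis using pd_cmult[OF a(2), of i "-1" x] by simp
qed

lemma pd_power: "pd i (\<lambda>x. x k ^ n) x = (if k = i \<and> n > 0 then real n * x i ^ (n - 1) else 0)"
proof -
  have "((\<lambda>y. (x(i:=y)) k ^ n) has_real_derivative (if k = i \<and> n > 0 then real n * x i ^ (n - 1) else 0)) (at (x i))"
  proof (cases "k = i")
    case True
    have "((\<lambda>y. y ^ n) has_real_derivative real n * x i ^ (n - 1)) (at (x i))"
      using DERIV_pow[of n "x i"] by simp
    thus ?thesis using True by (cases n) auto
  next
    case False thus ?thesis by simp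
  qed
  thus ?thesis unfolding pd_def by (rule DERIV_imp_deriv)
qed

lemma polyf_hsym: "polyf (hsym N n)"
  unfolding hsym_def by (intro polyf_sum polyf_prod polyf_power pcoord)

lemma polyf_esym: "polyf (esym N n)"
  unfolding esym_def by (intro polyf_sum polyf_prod pcoord)

lemma polyf_psym: "polyf (psym N n)"
proof -
  have "psym N n = (\<lambda>x. if n = 0 then 0 else \<Sum>i<N. x i ^ n)" by (simp add: fun_eq_iff psym_def)
  thus ?thesis by (cases "n = 0") (simp_all add: pconst polyf_sum polyf_power pcoord)
qed

lemma pd_psym: "i < N \<Longrightarrow> pd i (psym N r) x = (if r = 0 then 0 else real r * x i ^ (r - 1))"
proof -
  assume iN: "i < N"
  show ?thesis
  proof (cases "r = 0")
    case True
    hence "psym N r = (\<lambda>x. 0)" by (simp add: fun_eq_iff psym_def)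
    thus ?thesis using True by (simp add: pd_const)
  next
    case False
    hence "psym N r = (\<lambda>x. \<Sum>k<N. x k ^ r)" by (simp add: fun_eq_iff psym_def)
    hence "pd i (psym N r) x = (\<Sum>k<N. pd i (\<lambda>x. x k ^ r) x)"
      by (simp add: pd_sum polyf_power pcoord)
    also have "\<dots> = (\<Sum>k<N. if k = i then real r * x i ^ (r - 1) else 0)"
      using False by (simp add: pd_power)
    also have "\<dots> = real r * x i ^ (r - 1)" using iN by (simp add: sum.delta)
    finally show ?thesis using False by simp
  qed
qed




lemma esym_0: "esym 0 n x = (if n = 0 then 1 else 0)"
proof -
  have "{S. S \<subseteq> {..<0::nat} \<and> card S = n} = (if n = 0 then {{}} else {})" by auto
  thus ?thesis unfolding esym_def by simp
qed

lemma esym_Suc: "esym (Suc N) n x = esym N n x + (if n = 0 then 0 else x N * esym N (n-1) x)"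
proof (cases n)
  case 0
  have "\<And>k. {S. S \<subseteq> {..<k::nat} \<and> card S = 0} = {{}}"
    by (auto dest: finite_subset[OF _ finite_lessThan])
  thus ?thesis using 0 unfolding esym_def by simp
next
  case (Suc m)
  let ?A = "{S. S \<subseteq> {..<N} \<and> card S = Suc m}" and ?B = "{S. S \<subseteq> {..<N} \<and> card S = m}"
  have eq: "{S. S \<subseteq> {..<Suc N} \<and> card S = Suc m} = ?A \<union> insert N ` ?B"
  proof (intro set_eqI iffI)
    fix S assume S: "S \<in> {S. S \<subseteq> {..<Suc N} \<and> card S = Suc m}"
    hence fS: "finite S" using finite_subset by blast
    show "S \<in> ?A \<union> insert N ` ?B"
    proof (cases "N \<in> S")
      case True
      hence "S = insert N (S - {N})" by auto
      moreover have "S - {N} \<in> ?B" using S True fS by (auto simp: less_Suc_eq)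
      ultimately show ?thesis by blast
    next
      case False thus ?thesis using S by (auto simp: less_Suc_eq)
    qed
  next
    fix S assume "S \<in> ?A \<union> insert N ` ?B"
    thus "S \<in> {S. S \<subseteq> {..<Suc N} \<and> card S = Suc m}"
    proof
      assume "S \<in> ?A" thus ?thesis by auto
    next
      assume "S \<in> insert N ` ?B"
      then obtain T where T: "T \<in> ?B" "S = insert N T" by blast
      have "finite T" "N \<notin> T" using T(1) finite_subset by auto
      thus ?thesis using T by auto
    qed
  qed
  have fA: "finite ?A" "finite ?B" by auto
  have disj: "?A \<inter> insert N ` ?B = {}" by auto
  have inj: "inj_on (insert N) ?B" unfolding inj_on_def by auto
  have "esym (Suc N) n x = (\<Sum>S\<in>?A. \<Prod>i\<in>S. x i) + (\<Sum>S\<in>insert N ` ?B. \<Prod>i\<in>S. x i)"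
    unfolding esym_def Suc eq by (rule sum.union_disjoint) (use fA disj in auto)
  also have "(\<Sum>S\<in>insert N ` ?B. \<Prod>i\<in>S. x i) = (\<Sum>T\<in>?B. \<Prod>i\<in>insert N T. x i)"
    by (rule sum.reindex[OF inj, unfolded comp_def])
  also have "\<dots> = (\<Sum>T\<in>?B. x N * (\<Prod>i\<in>T. x i))"
  proof (rule sum.cong[OF refl])
    fix T assume "T \<in> ?B"
    hence "finite T" "N \<notin> T" using finite_subset by auto
    thus "(\<Prod>i\<in>insert N T. x i) = x N * (\<Prod>i\<in>T. x i)" by simp
  qed
  finally show ?thesis unfolding esym_def Suc by (simp add: sum_distrib_left)
qed

lemma hsym_0: "hsym 0 n x = (if n = 0 then 1 else 0)"
  unfolding hsym_def by (simp add: PiE_empty_domain)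

lemma hsym_Suc: "hsym (Suc N) n x = (\<Sum>k\<le>n. x N ^ k * hsym N (n-k) x)"
proof -
  define A :: "nat \<Rightarrow> nat \<Rightarrow> (nat \<Rightarrow> nat) set" where "A = (\<lambda>N m. {\<alpha> \<in> {..<N} \<rightarrow>\<^sub>E {..m}. sum \<alpha> {..<N} = m})"
  have fA: "finite (A M m)" for M m
    unfolding A_def by (rule finite_subset[OF _ finite_PiE[of "{..<M}" "\<lambda>_. {..m}"]]) auto+
  have "hsym (Suc N) n x = (\<Sum>\<alpha>\<in>A (Suc N) n. \<Prod>i<Suc N. x i ^ \<alpha> i)" by (simp add: hsym_def A_def)
  also have "\<dots> = (\<Sum>(k,\<beta>)\<in>Sigma {..n} (\<lambda>k. A N (n-k)). x N ^ k * (\<Prod>i<N. x i ^ \<beta> i))"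
  proof (rule sum.reindex_bij_witness[where i = "\<lambda>(k,\<beta>). \<beta>(N := k)" and j = "\<lambda>\<alpha>. (\<alpha> N, \<alpha>(N := undefined))"])
    fix \<alpha> assume a: "\<alpha> \<in> A (Suc N) n"
    show "(case (\<alpha> N, \<alpha>(N := undefined)) of (k, \<beta>) \<Rightarrow> \<beta>(N := k)) = \<alpha>" by simp
    have aN: "\<alpha> N \<le> n" using a by (auto simp: A_def PiE_def Pi_def)
    have s: "sum \<alpha> {..<N} + \<alpha> N = n" using a by (simp add: A_def)
    have s2: "sum (\<alpha>(N := undefined)) {..<N} = sum \<alpha> {..<N}" by (rule sum.cong) auto
    have le: "\<alpha> i \<le> n - \<alpha> N" if "i < N" for i
    proof -
      have "\<alpha> i \<le> sum \<alpha> {..<N}" using that by (intro member_le_sum) auto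
      thus ?thesis using s by simp
    qed
    show "(\<alpha> N, \<alpha>(N := undefined)) \<in> Sigma {..n} (\<lambda>k. A N (n-k))"
      using a aN s s2 le by (auto simp: A_def PiE_def Pi_def extensional_def)
    show "(case (\<alpha> N, \<alpha>(N := undefined)) of (k, \<beta>) \<Rightarrow> x N ^ k * (\<Prod>i<N. x i ^ \<beta> i)) = (\<Prod>i<Suc N. x i ^ \<alpha> i)"
      by (simp add: mult.commute)
  next
    fix z assume z: "z \<in> Sigma {..n} (\<lambda>k. A N (n-k))"
    then obtain k \<beta> where kb: "z = (k,\<beta>)" "k \<le> n" "\<beta> \<in> A N (n-k)" by auto
    have bN: "\<beta> N = undefined" using kb(3) by (auto simp: A_def PiE_def extensional_def)
    show "(\<lambda>\<alpha>. (\<alpha> N, \<alpha>(N := undefined))) (case z of (k, \<beta>) \<Rightarrow> \<beta>(N := k)) = z"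
      using kb bN by auto
    have s: "sum \<beta> {..<N} = n - k" using kb by (simp add: A_def)
    have s2: "sum (\<beta>(N := k)) {..<N} = sum \<beta> {..<N}" by (rule sum.cong) auto
    have le: "\<beta> i \<le> n" if "i < N" for i using kb(3) that by (auto simp: A_def PiE_def Pi_def)
    show "(case z of (k, \<beta>) \<Rightarrow> \<beta>(N := k)) \<in> A (Suc N) n"
      using kb s s2 le bN by (auto simp: A_def PiE_def Pi_def extensional_def less_Suc_eq)
  qed
  also have "\<dots> = (\<Sum>k\<le>n. \<Sum>\<beta>\<in>A N (n-k). x N ^ k * (\<Prod>i<N. x i ^ \<beta> i))"
    by (rule sum.Sigma[symmetric]) (auto simp: fA)
  also have "\<dots> = (\<Sum>k\<le>n. x N ^ k * hsym N (n-k) x)"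
    by (simp add: hsym_def A_def sum_distrib_left)
  finally show ?thesis .
qed

lemma psym_Suc: "psym (Suc N) n x = psym N n x + (if n = 0 then 0 else x N ^ n)"
  by (simp add: psym_def)

lemma psym_0: "psym 0 n x = 0" by (simp add: psym_def)


lemma sum_if0_pow: "(\<Sum>i=0..n. (if i = 0 then 0 else (a::real) ^ i) * a ^ (n - i)) = real n * a ^ n"
proof -
  have "(\<Sum>i=0..n. (if i = 0 then 0 else a ^ i) * a ^ (n - i)) = (\<Sum>i=0..n. if i = 0 then 0 else a ^ n)"
    by (intro sum.cong refl) (auto simp: power_add[symmetric])
  also have "\<dots> = real n * a ^ n"
  proof -
    have "\<And>m. (\<Sum>i=0..m. if i = 0 then 0 else c) = real m * (c::real)" for c
      by (induct_tac m) (auto simp: algebra_simps)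
    thus ?thesis by blast
  qed
  finally show ?thesis .
qed

context fixes x :: "nat \<Rightarrow> real"
begin

definition "HF N = Abs_fps (\<lambda>n. hsym N n x)"
definition "EF N = Abs_fps (\<lambda>n. (-1) ^ n * esym N n x)"
definition "E2 N = Abs_fps (\<lambda>n. esym N n x)"
definition "PF N = Abs_fps (\<lambda>n. psym N n x)"
definition "RF N = Abs_fps (\<lambda>n. (-1) ^ (n+1) * psym N n x)"

definition "GS a = Abs_fps (\<lambda>k. (a::real) ^ k)"
definition "QS a = Abs_fps (\<lambda>k. if k = 0 then 0 else (a::real) ^ k)"
definition "QE a = Abs_fps (\<lambda>k. if k = 0 then 0 else (-1) ^ (k+1) * (a::real) ^ k)"

lemma HF_0: "HF 0 = 1" by (intro fps_ext) (simp add: HF_def hsym_0)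
lemma EF_0: "EF 0 = 1" by (intro fps_ext) (simp add: EF_def esym_0)
lemma E2_0: "E2 0 = 1" by (intro fps_ext) (simp add: E2_def esym_0)
lemma PF_0: "PF 0 = 0" by (intro fps_ext) (simp add: PF_def psym_0)
lemma RF_0: "RF 0 = 0" by (intro fps_ext) (simp add: RF_def psym_0)

lemma HF_Suc: "HF (Suc N) = GS (x N) * HF N"
  by (intro fps_ext) (simp add: HF_def GS_def fps_mult_nth hsym_Suc atLeast0AtMost)

lemma EF_Suc: "EF (Suc N) = (1 - fps_const (x N) * fps_X) * EF N"
  by (intro fps_ext) (auto simp: EF_def esym_Suc algebra_simps power_eq_if)

lemma E2_Suc: "E2 (Suc N) = (1 + fps_const (x N) * fps_X) * E2 N"
  by (intro fps_ext) (auto simp: E2_def esym_Suc algebra_simps)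

lemma PF_Suc: "PF (Suc N) = PF N + QS (x N)"
  by (intro fps_ext) (simp add: PF_def QS_def psym_Suc)

lemma RF_Suc: "RF (Suc N) = RF N + QE (x N)"
  by (intro fps_ext) (simp add: RF_def QE_def psym_Suc algebra_simps)

lemma GS_inv: "GS a * (1 - fps_const a * fps_X) = 1"
  by (intro fps_ext) (auto simp: GS_def algebra_simps power_eq_if)

lemma GS_deriv: "fps_X * fps_deriv (GS a) = QS a * GS a"
proof (intro fps_ext)
  fix n
  show "fps_nth (fps_X * fps_deriv (GS a)) n = fps_nth (QS a * GS a) n"
  proof (cases n)
    case 0 thus ?thesis by (simp add: GS_def QS_def)
  next
    case (Suc m)
    have "fps_nth (QS a * GS a) n = real n * a ^ n"
      unfolding fps_mult_nth GS_def QS_def fps_nth_Abs_fps by (rule sum_if0_pow)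
    thus ?thesis using Suc by (simp add: GS_def)
  qed
qed

lemma QE_eq: "QE a * (1 + fps_const a * fps_X) = fps_const a * fps_X"
proof (intro fps_ext)
  fix n
  show "fps_nth (QE a * (1 + fps_const a * fps_X)) n = fps_nth (fps_const a * fps_X) n"
    by (cases n) (auto simp: QE_def algebra_simps)
qed

lemma HF_EF: "EF N * HF N = 1"
proof (induction N)
  case 0 thus ?case by (simp add: HF_0 EF_0)
next
  case (Suc N)
  have "EF (Suc N) * HF (Suc N) = (GS (x N) * (1 - fps_const (x N) * fps_X)) * (EF N * HF N)"
    by (simp add: EF_Suc HF_Suc mult_ac)
  thus ?case using Suc GS_inv by simp
qed

lemma HF_newton: "fps_X * fps_deriv (HF N) = PF N * HF N"
proof (induction N)
  case 0 thus ?case by (simp add: HF_0 PF_0)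
next
  case (Suc N)
  have "fps_X * fps_deriv (HF (Suc N)) = GS (x N) * (fps_X * fps_deriv (HF N)) + (fps_X * fps_deriv (GS (x N))) * HF N"
    by (simp add: HF_Suc algebra_simps)
  also have "\<dots> = (PF N + QS (x N)) * (GS (x N) * HF N)"
    by (simp add: Suc GS_deriv algebra_simps)
  finally show ?case by (simp add: HF_Suc PF_Suc)
qed

lemma E2_newton: "fps_X * fps_deriv (E2 N) = RF N * E2 N"
proof (induction N)
  case 0 thus ?case by (simp add: E2_0 RF_0)
next
  case (Suc N)
  let ?L = "1 + fps_const (x N) * fps_X"
  have "fps_X * fps_deriv (E2 (Suc N)) = ?L * (fps_X * fps_deriv (E2 N)) + fps_const (x N) * fps_X * E2 N"
    by (simp add: E2_Suc algebra_simps)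
  also have "\<dots> = ?L * (RF N * E2 N) + QE (x N) * ?L * E2 N"
    by (simp add: Suc QE_eq)
  also have "\<dots> = (RF N + QE (x N)) * (?L * E2 N)"
    by (simp add: algebra_simps)
  finally show ?case by (simp add: E2_Suc RF_Suc)
qed

end

lemma EH: "0 < m \<Longrightarrow> (\<Sum>r=0..m. (-1) ^ r * esym N r x * hsym N (m-r) x) = 0"
proof -
  assume "0 < m"
  hence "fps_nth (EF x N * HF x N) m = 0" by (simp add: HF_EF)
  thus ?thesis by (simp add: fps_mult_nth EF_def HF_def mult.assoc)
qed

lemma NH: "real m * hsym N m x = (\<Sum>r=0..m. psym N r x * hsym N (m-r) x)"
proof -
  have "fps_nth (fps_X * fps_deriv (HF x N)) m = fps_nth (PF x N * HF x N) m" by (simp add: HF_newton)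
  moreover have "fps_nth (fps_X * fps_deriv (HF x N)) m = real m * hsym N m x"
    by (cases m) (simp_all add: HF_def)
  moreover have "fps_nth (PF x N * HF x N) m = (\<Sum>r=0..m. psym N r x * hsym N (m-r) x)"
    by (simp add: fps_mult_nth HF_def PF_def)
  ultimately show ?thesis by simp
qed

lemma NE: "real m * esym N m x = (\<Sum>r=0..m. (-1) ^ (r+1) * psym N r x * esym N (m-r) x)"
proof -
  have "fps_nth (fps_X * fps_deriv (E2 x N)) m = fps_nth (RF x N * E2 x N) m" by (simp add: E2_newton)
  moreover have "fps_nth (fps_X * fps_deriv (E2 x N)) m = real m * esym N m x"
    by (cases m) (simp_all add: E2_def)
  moreover have "fps_nth (RF x N * E2 x N) m = (\<Sum>r=0..m. (-1) ^ (r+1) * psym N r x * esym N (m-r) x)"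
    by (simp add: fps_mult_nth E2_def RF_def mult.assoc)
  ultimately show ?thesis by simp
qed

lemma hsym_zero: "hsym N 0 x = 1"
  by (induction N) (simp_all add: hsym_0 hsym_Suc)
lemma esym_zero: "esym N 0 x = 1"
  by (induction N) (simp_all add: esym_0 esym_Suc)
lemma psym_zero: "psym N 0 x = 0" by (simp add: psym_def)




lemma polyf_uminus: "polyf f \<Longrightarrow> polyf (\<lambda>x. - f x)"
  using pmult[OF pconst[of "-1"]] by simp
lemma pd_uminus: "polyf f \<Longrightarrow> pd i (\<lambda>x. - f x) x = - pd i f x"
  using pd_mult[OF pconst[of "-1"], of f i x] by (simp add: pd_const)

lemmas polyf_simps = polyf_uminus pconst pcoord padd pmult polyf_diff polyf_sum polyf_power polyf_hsym polyf_esym polyf_psym polyf_pd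
lemmas pd_simps = pd_power pd_uminus pd_add pd_mult pd_diff pd_sum pd_const

lemma hsym0_fun: "hsym N 0 = (\<lambda>x. 1)" by (simp add: fun_eq_iff hsym_zero)
lemma esym0_fun: "esym N 0 = (\<lambda>x. 1)" by (simp add: fun_eq_iff esym_zero)
lemma psym0_fun: "psym N 0 = (\<lambda>x. 0)" by (simp add: fun_eq_iff psym_zero)
lemma pd_h0: "pd i (hsym N 0) x = 0" by (simp add: hsym0_fun pd_const)
lemma pd_e0: "pd i (esym N 0) x = 0" by (simp add: esym0_fun pd_const)

lemma EH_fun: "0 < m \<Longrightarrow> (\<lambda>x. \<Sum>r=0..m. (-1) ^ r * esym N r x * hsym N (m-r) x) = (\<lambda>x. 0)"
  using EH by auto
lemma NH_fun: "(\<lambda>x. real m * hsym N m x) = (\<lambda>x. \<Sum>r=0..m. psym N r x * hsym N (m-r) x)"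
  using NH by auto
lemma NE_fun: "(\<lambda>x. real m * esym N m x) = (\<lambda>x. \<Sum>r=0..m. (-1) ^ (r+1) * psym N r x * esym N (m-r) x)"
  using NE by auto

lemma D7: "(\<Sum>r=0..n. (-1) ^ r * (esym N r x * pd i (hsym N (n - r + 1)) x
                          - hsym N (n - r) x * pd i (esym N (r + 1)) x)) = 0"
proof -
  have "pd i (\<lambda>x. \<Sum>r=0..Suc n. (-1) ^ r * esym N r x * hsym N (Suc n - r) x) x = 0"
    by (subst EH_fun) (simp_all add: pd_const)
  hence d: "(\<Sum>r=0..Suc n. (-1) ^ r * (pd i (esym N r) x * hsym N (Suc n - r) x)) +
         (\<Sum>r=0..Suc n. (-1) ^ r * (esym N r x * pd i (hsym N (Suc n - r)) x)) = 0"
    by (simp add: polyf_simps pd_simps, simp add: sum.distrib sum_subtractf sum_negf algebra_simps)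
  have s1: "(\<Sum>r=0..Suc n. (-1) ^ r * (pd i (esym N r) x * hsym N (Suc n - r) x)) =
     (\<Sum>r=0..n. (-1) ^ Suc r * (pd i (esym N (Suc r)) x * hsym N (n - r) x))"
    by (subst sum.atLeast0_atMost_Suc_shift) (simp add: pd_e0)
  have s2: "(\<Sum>r=0..Suc n. (-1) ^ r * (esym N r x * pd i (hsym N (Suc n - r)) x)) =
     (\<Sum>r=0..n. (-1) ^ r * (esym N r x * pd i (hsym N (Suc n - r)) x))"
    by (subst sum.atLeast0_atMost_Suc) (simp add: pd_h0)
  have z: "(\<Sum>r=0..n. (-1) ^ Suc r * (pd i (esym N (Suc r)) x * hsym N (n - r) x)) +
         (\<Sum>r=0..n. (-1) ^ r * (esym N r x * pd i (hsym N (Suc n - r)) x)) = 0"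
    using d s1 s2 by linarith
  have "(\<Sum>r=0..n. (-1) ^ r * (esym N r x * pd i (hsym N (n - r + 1)) x
                          - hsym N (n - r) x * pd i (esym N (r + 1)) x)) =
       (\<Sum>r=0..n. (-1) ^ Suc r * (pd i (esym N (Suc r)) x * hsym N (n - r) x)) +
         (\<Sum>r=0..n. (-1) ^ r * (esym N r x * pd i (hsym N (Suc n - r)) x))"
    unfolding sum.distrib[symmetric] by (intro sum.cong refl) (auto simp: Suc_diff_le algebra_simps)
  thus ?thesis using z by simp
qed


lemma D8:
  assumes iN: "i < N"
  shows "real (n + 1) * pd i (hsym N (n + 1)) x =
    (\<Sum>r=0..n. psym N r x * pd i (hsym N (n - r + 1)) x + real (r + 1) * (hsym N (n - r) x * x i ^ r))"
proof -
  have "pd i (\<lambda>x. real (Suc n) * hsym N (Suc n) x) x = pd i (\<lambda>x. \<Sum>r=0..Suc n. psym N r x * hsym N (Suc n - r) x) x"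
    by (subst NH_fun) (rule refl)
  hence d: "real (Suc n) * pd i (hsym N (Suc n)) x =
     (\<Sum>r=0..Suc n. pd i (psym N r) x * hsym N (Suc n - r) x) +
     (\<Sum>r=0..Suc n. psym N r x * pd i (hsym N (Suc n - r)) x)"
    by (simp add: polyf_simps pd_simps, simp add: sum.distrib sum_subtractf sum_negf algebra_simps)
  have s1: "(\<Sum>r=0..Suc n. pd i (psym N r) x * hsym N (Suc n - r) x) =
     (\<Sum>r=0..n. real (Suc r) * x i ^ r * hsym N (n - r) x)"
    by (subst sum.atLeast0_atMost_Suc_shift) (simp add: pd_psym[OF iN])
  have s2: "(\<Sum>r=0..Suc n. psym N r x * pd i (hsym N (Suc n - r)) x) =
     (\<Sum>r=0..n. psym N r x * pd i (hsym N (Suc n - r)) x)"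
    by (subst sum.atLeast0_atMost_Suc) (simp add: pd_h0)
  have z: "real (Suc n) * pd i (hsym N (Suc n)) x = (\<Sum>r=0..n. real (Suc r) * x i ^ r * hsym N (n - r) x) +
     (\<Sum>r=0..n. psym N r x * pd i (hsym N (Suc n - r)) x)"
    using d s1 s2 by linarith
  have "(\<Sum>r=0..n. psym N r x * pd i (hsym N (n - r + 1)) x + real (r + 1) * (hsym N (n - r) x * x i ^ r)) =
     (\<Sum>r=0..n. real (Suc r) * x i ^ r * hsym N (n - r) x) +
     (\<Sum>r=0..n. psym N r x * pd i (hsym N (Suc n - r)) x)"
    unfolding sum.distrib[symmetric] by (intro sum.cong refl) (auto simp: Suc_diff_le algebra_simps)
  thus ?thesis using z by simp
qed

lemma D9:
  assumes iN: "i < N"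
  shows "real (n + 1) * pd i (esym N (n + 1)) x =
    (\<Sum>r=0..n. (-1) ^ (r + 1) * (psym N r x * pd i (esym N (n - r + 1)) x - real (r + 1) * (esym N (n - r) x * x i ^ r)))"
proof -
  have "pd i (\<lambda>x. real (Suc n) * esym N (Suc n) x) x = pd i (\<lambda>x. \<Sum>r=0..Suc n. (-1) ^ (r+1) * psym N r x * esym N (Suc n - r) x) x"
    by (subst NE_fun) (rule refl)
  hence d: "real (Suc n) * pd i (esym N (Suc n)) x =
     (\<Sum>r=0..Suc n. (-1) ^ (r+1) * (pd i (psym N r) x * esym N (Suc n - r) x)) +
     (\<Sum>r=0..Suc n. (-1) ^ (r+1) * (psym N r x * pd i (esym N (Suc n - r)) x))"
    by (simp add: polyf_simps pd_simps, simp add: sum.distrib sum_subtractf sum_negf algebra_simps)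
  have s1: "(\<Sum>r=0..Suc n. (-1) ^ (r+1) * (pd i (psym N r) x * esym N (Suc n - r) x)) =
     (\<Sum>r=0..n. (-1) ^ r * (real (Suc r) * x i ^ r * esym N (n - r) x))"
    by (subst sum.atLeast0_atMost_Suc_shift) (simp add: pd_psym[OF iN])
  have s2: "(\<Sum>r=0..Suc n. (-1) ^ (r+1) * (psym N r x * pd i (esym N (Suc n - r)) x)) =
     (\<Sum>r=0..n. (-1) ^ (r+1) * (psym N r x * pd i (esym N (Suc n - r)) x))"
    by (subst sum.atLeast0_atMost_Suc) (simp add: pd_e0)
  have z: "real (Suc n) * pd i (esym N (Suc n)) x = (\<Sum>r=0..n. (-1) ^ r * (real (Suc r) * x i ^ r * esym N (n - r) x)) +
     (\<Sum>r=0..n. (-1) ^ (r+1) * (psym N r x * pd i (esym N (Suc n - r)) x))"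
    using d s1 s2 by linarith
  have "(\<Sum>r=0..n. (-1) ^ (r + 1) * (psym N r x * pd i (esym N (n - r + 1)) x - real (r + 1) * (esym N (n - r) x * x i ^ r))) =
     (\<Sum>r=0..n. (-1) ^ r * (real (Suc r) * x i ^ r * esym N (n - r) x)) +
     (\<Sum>r=0..n. (-1) ^ (r+1) * (psym N r x * pd i (esym N (Suc n - r)) x))"
    unfolding sum.distrib[symmetric] by (intro sum.cong refl) (auto simp: Suc_diff_le algebra_simps)
  thus ?thesis using z by simp
qed


lemma D7_fun: "(\<lambda>x. \<Sum>r=0..n. (-1) ^ r * (esym N r x * pd i (hsym N (n - r + 1)) x
                          - hsym N (n - r) x * pd i (esym N (r + 1)) x)) = (\<lambda>x. 0)"
  using D7 by auto

lemma D8_fun: "i < N \<Longrightarrow> (\<lambda>x. real (n + 1) * pd i (hsym N (n + 1)) x) =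
   (\<lambda>x. \<Sum>r=0..n. psym N r x * pd i (hsym N (n - r + 1)) x + real (r + 1) * (hsym N (n - r) x * x i ^ r))"
  using D8 by auto

lemma D9_fun: "i < N \<Longrightarrow> (\<lambda>x. real (n + 1) * pd i (esym N (n + 1)) x) =
   (\<lambda>x. \<Sum>r=0..n. (-1) ^ (r + 1) * (psym N r x * pd i (esym N (n - r + 1)) x - real (r + 1) * (esym N (n - r) x * x i ^ r)))"
  using D9 by auto

lemma h1_p1: "hsym N 1 = psym N 1"
  using NH_fun[of 1 N] by (simp add: fun_eq_iff hsym_zero psym_zero)
lemma e1_p1: "esym N 1 = psym N 1"
  using NE_fun[of 1 N] by (simp add: fun_eq_iff esym_zero psym_zero)

lemma pd_p1_fun: "j < N \<Longrightarrow> pd j (psym N 1) = (\<lambda>x. 1)"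
  by (simp add: fun_eq_iff pd_psym)

lemma pdpd_h1: "j < N \<Longrightarrow> pd i (pd j (hsym N (Suc 0))) x = 0"
  unfolding One_nat_def[symmetric] h1_p1 by (simp only: pd_p1_fun pd_const)
lemma pdpd_e1: "j < N \<Longrightarrow> pd i (pd j (esym N (Suc 0))) x = 0"
  unfolding One_nat_def[symmetric] e1_p1 by (simp only: pd_p1_fun pd_const)

lemma D4:
  assumes iN: "i < N" and jN: "j < N"
  shows "(\<Sum>r=0..n. (-1) ^ r * (hsym N (n - r) x * pd i (pd j (esym N (r + 2))) x
       - pd i (hsym N (n - r + 1)) x * pd j (esym N (r + 1)) x
       - pd i (esym N (r + 1)) x * pd j (hsym N (n - r + 1)) x
       + esym N r x * pd i (pd j (hsym N (n - r + 2))) x)) = 0"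
proof -
  have "pd i (\<lambda>x. \<Sum>r=0..Suc n. (-1) ^ r * (esym N r x * pd j (hsym N (Suc n - r + 1)) x
                          - hsym N (Suc n - r) x * pd j (esym N (r + 1)) x)) x = 0"
    by (subst D7_fun) (simp add: pd_const)
  hence d: "(\<Sum>r=0..Suc n. (-1) ^ r * (pd i (esym N r) x * pd j (hsym N (Suc n - r + 1)) x)) +
            (\<Sum>r=0..Suc n. (-1) ^ r * (esym N r x * pd i (pd j (hsym N (Suc n - r + 1))) x)) -
            (\<Sum>r=0..Suc n. (-1) ^ r * (pd i (hsym N (Suc n - r)) x * pd j (esym N (r + 1)) x)) -
            (\<Sum>r=0..Suc n. (-1) ^ r * (hsym N (Suc n - r) x * pd i (pd j (esym N (r + 1))) x)) = 0"
    by (simp add: polyf_simps pd_simps, simp add: sum.distrib sum_subtractf sum_negf algebra_simps)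
  have s1: "(\<Sum>r=0..Suc n. (-1) ^ r * (pd i (esym N r) x * pd j (hsym N (Suc n - r + 1)) x)) =
     (\<Sum>r=0..n. (-1) ^ Suc r * (pd i (esym N (Suc r)) x * pd j (hsym N (n - r + 1)) x))"
    by (subst sum.atLeast0_atMost_Suc_shift) (simp add: pd_e0)
  have s2: "(\<Sum>r=0..Suc n. (-1) ^ r * (esym N r x * pd i (pd j (hsym N (Suc n - r + 1))) x)) =
     (\<Sum>r=0..n. (-1) ^ r * (esym N r x * pd i (pd j (hsym N (Suc n - r + 1))) x))"
    by (subst sum.atLeast0_atMost_Suc) (simp add: pdpd_h1[OF jN])
  have s3: "(\<Sum>r=0..Suc n. (-1) ^ r * (pd i (hsym N (Suc n - r)) x * pd j (esym N (r + 1)) x)) =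
     (\<Sum>r=0..n. (-1) ^ r * (pd i (hsym N (Suc n - r)) x * pd j (esym N (r + 1)) x))"
    by (subst sum.atLeast0_atMost_Suc) (simp add: pd_h0)
  have s4: "(\<Sum>r=0..Suc n. (-1) ^ r * (hsym N (Suc n - r) x * pd i (pd j (esym N (r + 1))) x)) =
     (\<Sum>r=0..n. (-1) ^ Suc r * (hsym N (n - r) x * pd i (pd j (esym N (r + 2))) x))"
    by (subst sum.atLeast0_atMost_Suc_shift) (simp add: pdpd_e1[OF jN])
  have z: "(\<Sum>r=0..n. (-1) ^ Suc r * (pd i (esym N (Suc r)) x * pd j (hsym N (n - r + 1)) x)) +
     (\<Sum>r=0..n. (-1) ^ r * (esym N r x * pd i (pd j (hsym N (Suc n - r + 1))) x)) -
     (\<Sum>r=0..n. (-1) ^ r * (pd i (hsym N (Suc n - r)) x * pd j (esym N (r + 1)) x)) -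
     (\<Sum>r=0..n. (-1) ^ Suc r * (hsym N (n - r) x * pd i (pd j (esym N (r + 2))) x)) = 0"
    using d s1 s2 s3 s4 by linarith
  have "(\<Sum>r=0..n. (-1) ^ r * (hsym N (n - r) x * pd i (pd j (esym N (r + 2))) x
       - pd i (hsym N (n - r + 1)) x * pd j (esym N (r + 1)) x
       - pd i (esym N (r + 1)) x * pd j (hsym N (n - r + 1)) x
       + esym N r x * pd i (pd j (hsym N (n - r + 2))) x)) =
     (\<Sum>r=0..n. (-1) ^ Suc r * (pd i (esym N (Suc r)) x * pd j (hsym N (n - r + 1)) x)) +
     (\<Sum>r=0..n. (-1) ^ r * (esym N r x * pd i (pd j (hsym N (Suc n - r + 1))) x)) -
     (\<Sum>r=0..n. (-1) ^ r * (pd i (hsym N (Suc n - r)) x * pd j (esym N (r + 1)) x)) -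
     (\<Sum>r=0..n. (-1) ^ Suc r * (hsym N (n - r) x * pd i (pd j (esym N (r + 2))) x))"
    unfolding sum.distrib[symmetric] sum_subtractf[symmetric]
    by (intro sum.cong refl) (auto simp: Suc_diff_le algebra_simps numeral_2_eq_2)
  thus ?thesis using z by simp
qed


lemma D5:
  assumes iN: "i < N" and jN: "j < N"
  shows "real (n + 2) * pd i (pd j (hsym N (n + 2))) x =
    (\<Sum>r=0..n. psym N r x * pd i (pd j (hsym N (n - r + 2))) x
       + real (r + 1) * (x i ^ r * pd j (hsym N (n - r + 1)) x + pd i (hsym N (n - r + 1)) x * x j ^ r)
       + real ((r + 2) * (r + 1)) * (hsym N (n - r) x * (if i = j then x i ^ r else 0)))"
proof -
  have "pd i (\<lambda>x. real (Suc n + 1) * pd j (hsym N (Suc n + 1)) x) x =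
        pd i (\<lambda>x. \<Sum>r=0..Suc n. psym N r x * pd j (hsym N (Suc n - r + 1)) x + real (r + 1) * (hsym N (Suc n - r) x * x j ^ r)) x"
    by (subst D8_fun[OF jN]) (rule refl)
  hence d: "real (n + 2) * pd i (pd j (hsym N (n + 2))) x =
     (\<Sum>r=0..Suc n. pd i (psym N r) x * pd j (hsym N (Suc n - r + 1)) x) +
     (\<Sum>r=0..Suc n. psym N r x * pd i (pd j (hsym N (Suc n - r + 1))) x) +
     (\<Sum>r=0..Suc n. real (r + 1) * (pd i (hsym N (Suc n - r)) x * x j ^ r)) +
     (\<Sum>r=0..Suc n. real (r + 1) * (hsym N (Suc n - r) x * pd i (\<lambda>x. x j ^ r) x))"
    by (simp add: polyf_simps pd_simps del: pd_power, simp add: sum.distrib sum_subtractf sum_negf algebra_simps)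
  have s1: "(\<Sum>r=0..Suc n. pd i (psym N r) x * pd j (hsym N (Suc n - r + 1)) x) =
     (\<Sum>r=0..n. real (Suc r) * x i ^ r * pd j (hsym N (n - r + 1)) x)"
    by (subst sum.atLeast0_atMost_Suc_shift) (simp add: pd_psym[OF iN])
  have s2: "(\<Sum>r=0..Suc n. psym N r x * pd i (pd j (hsym N (Suc n - r + 1))) x) =
     (\<Sum>r=0..n. psym N r x * pd i (pd j (hsym N (Suc n - r + 1))) x)"
    by (subst sum.atLeast0_atMost_Suc) (simp add: pdpd_h1[OF jN])
  have s3: "(\<Sum>r=0..Suc n. real (r + 1) * (pd i (hsym N (Suc n - r)) x * x j ^ r)) =
     (\<Sum>r=0..n. real (r + 1) * (pd i (hsym N (Suc n - r)) x * x j ^ r))"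
    by (subst sum.atLeast0_atMost_Suc) (simp add: pd_h0)
  have s4: "(\<Sum>r=0..Suc n. real (r + 1) * (hsym N (Suc n - r) x * pd i (\<lambda>x. x j ^ r) x)) =
     (\<Sum>r=0..n. real (r + 2) * (hsym N (n - r) x * (if j = i then real (Suc r) * x i ^ r else 0)))"
    by (subst sum.atLeast0_atMost_Suc_shift) (simp add: pd_power pd_const cong: if_cong)
  have z: "real (n + 2) * pd i (pd j (hsym N (n + 2))) x =
     (\<Sum>r=0..n. real (Suc r) * x i ^ r * pd j (hsym N (n - r + 1)) x) +
     (\<Sum>r=0..n. psym N r x * pd i (pd j (hsym N (Suc n - r + 1))) x) +
     (\<Sum>r=0..n. real (r + 1) * (pd i (hsym N (Suc n - r)) x * x j ^ r)) +
     (\<Sum>r=0..n. real (r + 2) * (hsym N (n - r) x * (if j = i then real (Suc r) * x i ^ r else 0)))"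
    using d s1 s2 s3 s4 by linarith
  have "(\<Sum>r=0..n. psym N r x * pd i (pd j (hsym N (n - r + 2))) x
       + real (r + 1) * (x i ^ r * pd j (hsym N (n - r + 1)) x + pd i (hsym N (n - r + 1)) x * x j ^ r)
       + real ((r + 2) * (r + 1)) * (hsym N (n - r) x * (if i = j then x i ^ r else 0))) =
     (\<Sum>r=0..n. real (Suc r) * x i ^ r * pd j (hsym N (n - r + 1)) x) +
     (\<Sum>r=0..n. psym N r x * pd i (pd j (hsym N (Suc n - r + 1))) x) +
     (\<Sum>r=0..n. real (r + 1) * (pd i (hsym N (Suc n - r)) x * x j ^ r)) +
     (\<Sum>r=0..n. real (r + 2) * (hsym N (n - r) x * (if j = i then real (Suc r) * x i ^ r else 0)))"
    unfolding sum.distrib[symmetric]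
    by (intro sum.cong refl) (auto simp: Suc_diff_le algebra_simps numeral_2_eq_2)
  thus ?thesis using z by simp
qed

lemma D6:
  assumes iN: "i < N" and jN: "j < N"
  shows "real (n + 2) * pd i (pd j (esym N (n + 2))) x =
    (\<Sum>r=0..n. (-1) ^ (r + 1) * (psym N r x * pd i (pd j (esym N (n - r + 2))) x
       - real (r + 1) * (x i ^ r * pd j (esym N (n - r + 1)) x + pd i (esym N (n - r + 1)) x * x j ^ r)
       + real ((r + 2) * (r + 1)) * (esym N (n - r) x * (if i = j then x i ^ r else 0))))"
proof -
  have "pd i (\<lambda>x. real (Suc n + 1) * pd j (esym N (Suc n + 1)) x) x =
        pd i (\<lambda>x. \<Sum>r=0..Suc n. (-1) ^ (r + 1) * (psym N r x * pd j (esym N (Suc n - r + 1)) x - real (r + 1) * (esym N (Suc n - r) x * x j ^ r))) x"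
    by (subst D9_fun[OF jN]) (rule refl)
  hence d: "real (n + 2) * pd i (pd j (esym N (n + 2))) x =
     (\<Sum>r=0..Suc n. (-1) ^ (r + 1) * (pd i (psym N r) x * pd j (esym N (Suc n - r + 1)) x)) +
     (\<Sum>r=0..Suc n. (-1) ^ (r + 1) * (psym N r x * pd i (pd j (esym N (Suc n - r + 1))) x)) -
     (\<Sum>r=0..Suc n. (-1) ^ (r + 1) * (real (r + 1) * (pd i (esym N (Suc n - r)) x * x j ^ r))) -
     (\<Sum>r=0..Suc n. (-1) ^ (r + 1) * (real (r + 1) * (esym N (Suc n - r) x * pd i (\<lambda>x. x j ^ r) x)))"
    by (simp add: polyf_simps pd_simps del: pd_power, simp add: sum.distrib sum_subtractf sum_negf algebra_simps)
  have s1: "(\<Sum>r=0..Suc n. (-1) ^ (r + 1) * (pd i (psym N r) x * pd j (esym N (Suc n - r + 1)) x)) =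
     (\<Sum>r=0..n. (-1) ^ r * (real (Suc r) * x i ^ r * pd j (esym N (n - r + 1)) x))"
    by (subst sum.atLeast0_atMost_Suc_shift) (simp add: pd_psym[OF iN])
  have s2: "(\<Sum>r=0..Suc n. (-1) ^ (r + 1) * (psym N r x * pd i (pd j (esym N (Suc n - r + 1))) x)) =
     (\<Sum>r=0..n. (-1) ^ (r + 1) * (psym N r x * pd i (pd j (esym N (Suc n - r + 1))) x))"
    by (subst sum.atLeast0_atMost_Suc) (simp add: pdpd_e1[OF jN])
  have s3: "(\<Sum>r=0..Suc n. (-1) ^ (r + 1) * (real (r + 1) * (pd i (esym N (Suc n - r)) x * x j ^ r))) =
     (\<Sum>r=0..n. (-1) ^ (r + 1) * (real (r + 1) * (pd i (esym N (Suc n - r)) x * x j ^ r)))"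
    by (subst sum.atLeast0_atMost_Suc) (simp add: pd_e0)
  have s4: "(\<Sum>r=0..Suc n. (-1) ^ (r + 1) * (real (r + 1) * (esym N (Suc n - r) x * pd i (\<lambda>x. x j ^ r) x))) =
     (\<Sum>r=0..n. (-1) ^ r * (real (r + 2) * (esym N (n - r) x * (if j = i then real (Suc r) * x i ^ r else 0))))"
    by (subst sum.atLeast0_atMost_Suc_shift) (simp add: pd_power pd_const cong: if_cong)
  have z: "real (n + 2) * pd i (pd j (esym N (n + 2))) x =
     (\<Sum>r=0..n. (-1) ^ r * (real (Suc r) * x i ^ r * pd j (esym N (n - r + 1)) x)) +
     (\<Sum>r=0..n. (-1) ^ (r + 1) * (psym N r x * pd i (pd j (esym N (Suc n - r + 1))) x)) -
     (\<Sum>r=0..n. (-1) ^ (r + 1) * (real (r + 1) * (pd i (esym N (Suc n - r)) x * x j ^ r))) -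
     (\<Sum>r=0..n. (-1) ^ r * (real (r + 2) * (esym N (n - r) x * (if j = i then real (Suc r) * x i ^ r else 0))))"
    using d s1 s2 s3 s4 by linarith
  have "(\<Sum>r=0..n. (-1) ^ (r + 1) * (psym N r x * pd i (pd j (esym N (n - r + 2))) x
       - real (r + 1) * (x i ^ r * pd j (esym N (n - r + 1)) x + pd i (esym N (n - r + 1)) x * x j ^ r)
       + real ((r + 2) * (r + 1)) * (esym N (n - r) x * (if i = j then x i ^ r else 0)))) =
     (\<Sum>r=0..n. (-1) ^ r * (real (Suc r) * x i ^ r * pd j (esym N (n - r + 1)) x)) +
     (\<Sum>r=0..n. (-1) ^ (r + 1) * (psym N r x * pd i (pd j (esym N (Suc n - r + 1))) x)) -
     (\<Sum>r=0..n. (-1) ^ (r + 1) * (real (r + 1) * (pd i (esym N (Suc n - r)) x * x j ^ r))) -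
     (\<Sum>r=0..n. (-1) ^ r * (real (r + 2) * (esym N (n - r) x * (if j = i then real (Suc r) * x i ^ r else 0))))"
    unfolding sum.distrib[symmetric] sum_subtractf[symmetric]
    by (intro sum.cong refl) (auto simp: Suc_diff_le algebra_simps numeral_2_eq_2)
  thus ?thesis using z by simp
qed




definition B1 :: "nat \<Rightarrow> (nat \<Rightarrow> sga) \<Rightarrow> (nat \<Rightarrow> real) \<Rightarrow> sga" where
  "B1 N G K = ssum (\<lambda>i. sscal (K i) (G i)) {..<N}"

definition B2 :: "nat \<Rightarrow> (nat \<Rightarrow> nat \<Rightarrow> real) \<Rightarrow> sga" where
  "B2 N K = ssum (\<lambda>i. ssum (\<lambda>j. sscal (K i j) (smul (gphi i) (gtheta j))) {..<N}) {..<N}"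

lemma B1_app: "B1 N G K a U = (\<Sum>i<N. K i * G i a U)"
  by (simp add: B1_def ssum_def sscal_def)
lemma B2_app: "B2 N K a U = (\<Sum>i<N. \<Sum>j<N. K i j * smul (gphi i) (gtheta j) a U)"
  by (simp add: B2_def ssum_def sscal_def)

lemma B1_sscal: "sscal c (B1 N G K) = B1 N G (\<lambda>i. c * K i)"
  by (simp add: fun_eq_iff B1_app sscal_def sum_distrib_left mult.assoc)
lemma B1_sadd: "sadd (B1 N G K) (B1 N G L) = B1 N G (\<lambda>i. K i + L i)"
  by (simp add: fun_eq_iff B1_app sadd_def sum.distrib[symmetric] algebra_simps)
lemma B1_sdiff: "sdiff (B1 N G K) (B1 N G L) = B1 N G (\<lambda>i. K i - L i)"
  by (simp add: fun_eq_iff B1_app sdiff_def sum_subtractf[symmetric] algebra_simps)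
lemma B1_ssum: "ssum (\<lambda>r. B1 N G (K r)) R = B1 N G (\<lambda>i. \<Sum>r\<in>R. K r i)"
  by (simp add: fun_eq_iff B1_app ssum_def sum_distrib_right sum.swap[of _ R])
lemma B1_cong: "(\<And>i. i < N \<Longrightarrow> K i = L i) \<Longrightarrow> B1 N G K = B1 N G L"
  by (simp add: fun_eq_iff B1_app)
lemma B1_zero: "B1 N G (\<lambda>i. 0) = szero"
  by (simp add: fun_eq_iff B1_app szero_def)

lemma B2_sscal: "sscal c (B2 N K) = B2 N (\<lambda>i j. c * K i j)"
  by (simp add: fun_eq_iff B2_app sscal_def sum_distrib_left mult.assoc)
lemma B2_sadd: "sadd (B2 N K) (B2 N L) = B2 N (\<lambda>i j. K i j + L i j)"
  by (simp add: fun_eq_iff B2_app sadd_def sum.distrib[symmetric] algebra_simps)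
lemma B2_sdiff: "sdiff (B2 N K) (B2 N L) = B2 N (\<lambda>i j. K i j - L i j)"
  by (simp add: fun_eq_iff B2_app sdiff_def sum_subtractf[symmetric] algebra_simps)
lemma B2_ssum: "ssum (\<lambda>r. B2 N (K r)) R = B2 N (\<lambda>i j. \<Sum>r\<in>R. K r i j)"
proof -
  have "(\<Sum>r\<in>R. \<Sum>i<N. \<Sum>j<N. K r i j * m i j) = (\<Sum>i<N. \<Sum>j<N. (\<Sum>r\<in>R. K r i j) * m i j)" for m :: "nat \<Rightarrow> nat \<Rightarrow> real"
  proof -
    have "(\<Sum>r\<in>R. \<Sum>i<N. \<Sum>j<N. K r i j * m i j) = (\<Sum>i<N. \<Sum>r\<in>R. \<Sum>j<N. K r i j * m i j)"
      by (rule sum.swap)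
    also have "\<dots> = (\<Sum>i<N. \<Sum>j<N. \<Sum>r\<in>R. K r i j * m i j)"
      by (rule sum.cong[OF refl]) (rule sum.swap)
    finally show ?thesis by (simp add: sum_distrib_right)
  qed
  thus ?thesis by (simp add: fun_eq_iff B2_app ssum_def)
qed
lemma B2_cong: "(\<And>i j. i < N \<Longrightarrow> j < N \<Longrightarrow> K i j = L i j) \<Longrightarrow> B2 N K = B2 N L"
  by (simp add: fun_eq_iff B2_app)
lemma B2_zero: "B2 N (\<lambda>i j. 0) = szero"
  by (simp add: fun_eq_iff B2_app szero_def)

lemma smul_ssum_left: "smul (ssum f I) g = ssum (\<lambda>i. smul (f i) g) I"
proof (induction I rule: infinite_finite_induct)
  case (infinite A)
  hence "ssum f A = szero" "ssum (\<lambda>i. smul (f i) g) A = szero" by (simp_all add: fun_eq_iff ssum_def szero_def)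
  thus ?case by (simp add: smul_szero_left)
next
  case empty
  hence "ssum f {} = szero" "ssum (\<lambda>i. smul (f i) g) {} = szero" by (simp_all add: fun_eq_iff ssum_def szero_def)
  thus ?case by (simp add: smul_szero_left)
next
  case (insert a A)
  have "ssum f (insert a A) = sadd (f a) (ssum f A)" using insert by (simp add: fun_eq_iff ssum_def sadd_def)
  moreover have "ssum (\<lambda>i. smul (f i) g) (insert a A) = sadd (smul (f a) g) (ssum (\<lambda>i. smul (f i) g) A)"
    using insert by (simp add: fun_eq_iff ssum_def sadd_def)
  ultimately show ?case using insert by (simp add: smul_sadd_left)
qed

lemma smul_ssum_right: "smul g (ssum f I) = ssum (\<lambda>i. smul g (f i)) I"
proof (induction I rule: infinite_finite_induct)
  case (infinite A)
  hence "ssum f A = szero" "ssum (\<lambda>i. smul g (f i)) A = szero" by (simp_all add: fun_eq_iff ssum_def szero_def)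
  thus ?case by (simp add: smul_szero_right)
next
  case empty
  hence "ssum f {} = szero" "ssum (\<lambda>i. smul g (f i)) {} = szero" by (simp_all add: fun_eq_iff ssum_def szero_def)
  thus ?case by (simp add: smul_szero_right)
next
  case (insert a A)
  have "ssum f (insert a A) = sadd (f a) (ssum f A)" using insert by (simp add: fun_eq_iff ssum_def sadd_def)
  moreover have "ssum (\<lambda>i. smul g (f i)) (insert a A) = sadd (smul g (f a)) (ssum (\<lambda>i. smul g (f i)) A)"
    using insert by (simp add: fun_eq_iff ssum_def sadd_def)
  ultimately show ?case using insert by (simp add: smul_sadd_right)
qed

lemma B1_smul: "smul (B1 N gphi c) (B1 N gtheta d) = B2 N (\<lambda>i j. c i * d j)"
  unfolding B1_def smul_ssum_left smul_ssum_right smul_sscal_left smul_sscal_right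
  apply (simp add: fun_eq_iff B2_app ssum_def sscal_def sum_distrib_left mult.assoc)
  apply (intro allI)
  apply (subst sum.swap)
  apply (simp add: mult_ac)
  done

lemma glin_B1: "glin G F N n x = B1 N G (\<lambda>i. pd i (F N (n + 1)) x)"
  by (simp add: glin_def B1_def)
lemma plin_B1: "plin G N n x = B1 N G (\<lambda>i. x i ^ n)"
  by (simp add: plin_def B1_def)
lemma gbu_B2: "gbu F N n x = B2 N (\<lambda>i j. pd i (pd j (F N (n + 2))) x)"
  by (simp add: gbu_def B2_def)
lemma pbu_B2: "pbu N n x = B2 N (\<lambda>i j. if i = j then x i ^ n else 0)"
proof -
  have "pbu N n x a U = B2 N (\<lambda>i j. if i = j then x i ^ n else 0) a U" for a U
    unfolding B2_app by (simp add: pbu_def ssum_def sscal_def if_distrib[of "\<lambda>t. t * _"] sum.delta cong: if_cong)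
  thus ?thesis by blast
qed


lemmas Bsimps = glin_B1 plin_B1 gbu_B2 pbu_B2 B1_smul B1_sscal B1_sadd B1_sdiff B1_ssum
   B2_sscal B2_sadd B2_sdiff B2_ssum

lemma item4: "ssum (\<lambda>r. sscal ((-1) ^ r)
        (sadd (sdiff (sdiff (sscal (hsym N (n - r) x) (gbu esym N r x))
                            (smul (glin gphi hsym N (n - r) x) (glin gtheta esym N r x)))
                     (smul (glin gphi esym N r x) (glin gtheta hsym N (n - r) x)))
              (sscal (esym N r x) (gbu hsym N (n - r) x)))) {0..n} = szero"
  unfolding Bsimps B2_zero[of N, symmetric]
  by (rule B2_cong) (rule D4)


lemma item5: "sscal (real (n + 2)) (gbu hsym N n x) =
      ssum (\<lambda>r. sadd (sadd (sscal (psym N r x) (gbu hsym N (n - r) x))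
                  (sscal (real (r + 1))
                     (sadd (smul (plin gphi N r x) (glin gtheta hsym N (n - r) x))
                           (smul (glin gphi hsym N (n - r) x) (plin gtheta N r x)))))
                  (sscal (real ((r + 2) * (r + 1))) (sscal (hsym N (n - r) x) (pbu N r x))))
        {0..n}"
  unfolding Bsimps
  by (rule B2_cong) (rule D5)

lemma item6: "sscal (real (n + 2)) (gbu esym N n x) =
      ssum (\<lambda>r. sscal ((-1) ^ (r + 1))
               (sadd (sdiff (sscal (psym N r x) (gbu esym N (n - r) x))
                  (sscal (real (r + 1))
                     (sadd (smul (plin gphi N r x) (glin gtheta esym N (n - r) x))
                           (smul (glin gphi esym N (n - r) x) (plin gtheta N r x)))))
                  (sscal (real ((r + 2) * (r + 1))) (sscal (esym N (n - r) x) (pbu N r x)))))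
        {0..n}"
  unfolding Bsimps
  by (rule B2_cong) (rule D6)

lemma item7: "ssum (\<lambda>r. sscal ((-1) ^ r)
           (sdiff (sscal (esym N r x) (glin G hsym N (n - r) x))
                  (sscal (hsym N (n - r) x) (glin G esym N r x)))) {0..n} = szero"
  unfolding Bsimps B1_zero[of N G, symmetric]
  by (rule B1_cong) (rule D7)

lemma item8: "sscal (real (n + 1)) (glin G hsym N n x) =
         ssum (\<lambda>r. sadd (sscal (psym N r x) (glin G hsym N (n - r) x))
                     (sscal (real (r + 1)) (sscal (hsym N (n - r) x) (plin G N r x)))) {0..n}"
  unfolding Bsimps
  by (rule B1_cong) (rule D8)

lemma item9: "sscal (real (n + 1)) (glin G esym N n x) =
         ssum (\<lambda>r. sscal ((-1) ^ (r + 1))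
                (sdiff (sscal (psym N r x) (glin G esym N (n - r) x))
                       (sscal (real (r + 1)) (sscal (esym N (n - r) x) (plin G N r x))))) {0..n}"
  unfolding Bsimps
  by (rule B1_cong) (rule D9)


theorem mainTheorem4:
  fixes N n :: nat and x :: "nat \<Rightarrow> real"
  shows
   "smul (GH N x) (GE N x (-1)) = sone
  \<and> smul (GH N x) (GP N x 1) = euler_op (GH N x)
  \<and> smul (GE N x 1) (GP N x (-1)) = sscal (-1) (euler_op (GE N x 1))
  \<and> ssum (\<lambda>r. sscal ((-1) ^ r)
        (sadd (sdiff (sdiff (sscal (hsym N (n - r) x) (gbu esym N r x))
                            (smul (glin gphi hsym N (n - r) x) (glin gtheta esym N r x)))
                     (smul (glin gphi esym N r x) (glin gtheta hsym N (n - r) x)))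
              (sscal (esym N r x) (gbu hsym N (n - r) x)))) {0..n} = szero
  \<and> sscal (real (n + 2)) (gbu hsym N n x) =
      ssum (\<lambda>r. sadd (sadd (sscal (psym N r x) (gbu hsym N (n - r) x))
                  (sscal (real (r + 1))
                     (sadd (smul (plin gphi N r x) (glin gtheta hsym N (n - r) x))
                           (smul (glin gphi hsym N (n - r) x) (plin gtheta N r x)))))
                  (sscal (real ((r + 2) * (r + 1))) (sscal (hsym N (n - r) x) (pbu N r x))))
        {0..n}
  \<and> sscal (real (n + 2)) (gbu esym N n x) =
      ssum (\<lambda>r. sscal ((-1) ^ (r + 1))
               (sadd (sdiff (sscal (psym N r x) (gbu esym N (n - r) x))
                  (sscal (real (r + 1))
                     (sadd (smul (plin gphi N r x) (glin gtheta esym N (n - r) x))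
                           (smul (glin gphi esym N (n - r) x) (plin gtheta N r x)))))
                  (sscal (real ((r + 2) * (r + 1))) (sscal (esym N (n - r) x) (pbu N r x)))))
        {0..n}
  \<and> (\<forall>G \<in> {gphi, gtheta}.
       ssum (\<lambda>r. sscal ((-1) ^ r)
           (sdiff (sscal (esym N r x) (glin G hsym N (n - r) x))
                  (sscal (hsym N (n - r) x) (glin G esym N r x)))) {0..n} = szero
     \<and> sscal (real (n + 1)) (glin G hsym N n x) =
         ssum (\<lambda>r. sadd (sscal (psym N r x) (glin G hsym N (n - r) x))
                     (sscal (real (r + 1)) (sscal (hsym N (n - r) x) (plin G N r x)))) {0..n}
     \<and> sscal (real (n + 1)) (glin G esym N n x) =
         ssum (\<lambda>r. sscal ((-1) ^ (r + 1))
                (sdiff (sscal (psym N r x) (glin G esym N (n - r) x))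
                       (sscal (real (r + 1)) (sscal (esym N (n - r) x) (plin G N r x))))) {0..n})"
    by (intro conjI ballI item1 item2 item3 item4 item5 item6 item7 item8 item9)

end
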